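(* Let $\gamma:\mathbb N\to[0,1]$ be a rate function. For every process distribution $\mu\in\mathscr C^\beta$ with coordinate process $\mathbf X$, $\mu$-almost surely \[\lim_{t\to\infty}\widetilde g_t(\mathbf X)=\begin{cases}+1&\text{if }\mu\in\mathscr C^\beta\cap\mathscr R^\beta_\gamma,\\-1&\text{if }\mu\in\mathscr C^\beta\setminus\mathscr R^\beta_\gamma.\end{cases}\]
   Context: $X_t$ is the $t$-th coordinate of $[0,1]^{\mathbb N}$. $\beta(\mathfrak U,\mathfrak V):=\sup_{W\in\mathfrak U\otimes\mathfrak V}|\mu_\otimes(W)-(\mu_{\mathfrak U}\times\mu_{\mathfrak V})(W)|$ ($\mu_\otimes$ pushforward of $\mu$ under $\omega\mapsto(\omega,\omega)$, $\mu_{\mathfrak U},\mu_{\mathfrak V}$ restrictions); $\beta(m):=\sup_j\beta(\sigma(X_1,\dots,X_j),\sigma(X_t:t\ge j+m))$; $\|\boldsymbol\beta\|:=\sum_m\beta(m)$. $\mathscr C^\beta$ is the class of stationary $\beta$-mixing processes with $\|\boldsymbol\beta\|<\infty$; $\mathscr R^\beta_\gamma$ the class of processes with $\beta(m)\le\gamma(m)$ for all $m$. Dyadic cubes: $I_{\ell,i}=[i2^{-\ell},(i+1)2^{-\ell})$, $i=0,\dots,2^\ell-1$ (last interval closed); $\Delta_{k,\ell}$ the set of cubes $I_{\ell,i_1}\times\cdots\times I_{\ell,i_k}$. Empirical estimator: for $n>m$, $j\in\{1,\dots,n-m\}$, $j':=n-m-j+1$, $\mu_t(\mathbf X,B):=\frac1t\sum_{i=0}^{t-1}\mathbf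 1\{(X_{ik+1},\dots,X_{(i+1)k})\in B\}$, $\gamma_{t,n}^{m,j}(\mathbf X,A,B):=\frac1t\sum_{i=0}^{t-1}\mathbf 1\{(X_{in+1},\dots,X_{in+j})\in A\}\mathbf 1\{(X_{in+j+m},\dots,X_{(i+1)n})\in B\}$, $\widehat\beta_{t,n}^{\ell}(\mathbf X,m):=\max_{j}\frac12\sum_{A\in\Delta_{j,\ell}}\sum_{B\in\Delta_{j',\ell}}|\gamma_{t,n}^{m,j}(\mathbf X,A,B)-\mu_t(\mathbf X,A)\mu_t(\mathbf X,B)|$. Parameters: $(M_t),(\ell_t),(n_t)$ increasing positive integer sequences with $n_t>M_t$; $\delta\in(0,1)$, $(\delta_t)$ positive with $\sum_t\delta_t=\delta$; $(\epsilon_t)$ decreasing positive with $\epsilon_t\to0$. With $\widetilde C_{m,\ell,n}:=m\cdot2^{2^{2n\ell+1}+2^{m\ell+1}+2}$, $\widetilde\tau_t(m):=\lceil\widetilde C_{m,\ell_t,n_t}/(m\epsilon_t^2\delta_t)\rceil$ and $\widehat\beta_t(\mathbf X,m):=\widehat\beta_{\widetilde\tau_t(m),n_t}^{\ell_t}(\mathbf X,m)$. The test is $\widetilde g_t(\mathbf X):=+1$ if $\widehat\beta_t(\mathbf X,m)\le\gamma(m)+\epsilon_t$ for all $m\in\{1,\dots,M_t\}$, and $-1$ otherwise. *)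

theory Defs
  imports "HOL-Probability.Probability"
begin

text \<open>The path space [0,1]^N with its product sigma-algebra.  A path is
  omega :: nat => real; the coordinate X_t (t >= 1) is omega (t - 1).\<close>

definition Omega :: "(nat \<Rightarrow> real) measure" where
  "Omega = (\<Pi>\<^sub>M i\<in>(UNIV::nat set). restrict_space borel {0..1::real})"

definition coord :: "nat \<Rightarrow> (nat \<Rightarrow> real) \<Rightarrow> real" where
  "coord t \<omega> = \<omega> (t - 1)"

definition process_distribution :: "(nat \<Rightarrow> real) measure \<Rightarrow> bool" where
  "process_distribution \<mu> \<longleftrightarrow> prob_space \<mu> \<and> sets \<mu> = sets Omega"

definition shift :: "(nat \<Rightarrow> real) \<Rightarrow> (nat \<Rightarrow> real)" where
  "shift \<omega> = (\<lambda>i. \<omega> (Suc i))"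

definition stationary :: "(nat \<Rightarrow> real) measure \<Rightarrow> bool" where
  "stationary \<mu> \<longleftrightarrow> distr \<mu> \<mu> shift = \<mu>"

definition gen_alg :: "nat set \<Rightarrow> (nat \<Rightarrow> real) measure" where
  "gen_alg T = sigma (space Omega)
     (\<Union>t\<in>T. {coord t -` B \<inter> space Omega | B. B \<in> sets (borel :: real measure)})"

definition beta_sub :: "(nat \<Rightarrow> real) measure \<Rightarrow> (nat \<Rightarrow> real) measure \<Rightarrow> (nat \<Rightarrow> real) measure \<Rightarrow> real" where
  "beta_sub \<mu> U V =
     (let P = restr_to_subalg \<mu> U \<Otimes>\<^sub>M restr_to_subalg \<mu> V;
          D = distr \<mu> (U \<Otimes>\<^sub>M V) (\<lambda>\<omega>. (\<omega>, \<omega>))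
      in SUP W\<in>sets (U \<Otimes>\<^sub>M V). \<bar>measure D W - measure P W\<bar>)"

definition beta_coef :: "(nat \<Rightarrow> real) measure \<Rightarrow> nat \<Rightarrow> real" where
  "beta_coef \<mu> m = (SUP j\<in>{1..}. beta_sub \<mu> (gen_alg {1..j}) (gen_alg {j + m..}))"

definition class_C :: "(nat \<Rightarrow> real) measure \<Rightarrow> bool" where
  "class_C \<mu> \<longleftrightarrow> process_distribution \<mu> \<and> stationary \<mu> \<and>
     (\<lambda>m. beta_coef \<mu> m) \<longlonglongrightarrow> 0 \<and> summable (\<lambda>m. beta_coef \<mu> (Suc m))"

definition class_R :: "(nat \<Rightarrow> real) \<Rightarrow> (nat \<Rightarrow> real) measure \<Rightarrow> bool" where
  "class_R \<gamma> \<mu> \<longleftrightarrow> (\<forall>m\<ge>1. beta_coef \<mu> m \<le> \<gamma> m)"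

definition dyadic_int :: "nat \<Rightarrow> nat \<Rightarrow> real set" where
  "dyadic_int l i =
     (if i = 2 ^ l - 1 then {real i / 2 ^ l .. (real i + 1) / 2 ^ l}
      else {real i / 2 ^ l ..< (real i + 1) / 2 ^ l})"

text \<open>Delta_{k,l}: a cube I_{l,i_1} x ... x I_{l,i_k} is represented by its index list
  [i_1,...,i_k] with each i_r < 2^l.\<close>
definition dyadic_cubes :: "nat \<Rightarrow> nat \<Rightarrow> nat list set" where
  "dyadic_cubes k l = {c. length c = k \<and> (\<forall>i\<in>set c. i < 2 ^ l)}"

definition block_in :: "nat \<Rightarrow> nat list \<Rightarrow> nat \<Rightarrow> (nat \<Rightarrow> real) \<Rightarrow> bool" where
  "block_in l c s \<omega> \<longleftrightarrow> (\<forall>r<length c. coord (s + r) \<omega> \<in> dyadic_int l (c ! r))"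

definition emp_mu :: "nat \<Rightarrow> nat \<Rightarrow> (nat \<Rightarrow> real) \<Rightarrow> nat list \<Rightarrow> real" where
  "emp_mu l t \<omega> B = (1 / real t) *
     (\<Sum>i<t. if block_in l B (i * length B + 1) \<omega> then 1 else 0)"

definition emp_gamma :: "nat \<Rightarrow> nat \<Rightarrow> nat \<Rightarrow> nat \<Rightarrow> nat \<Rightarrow> (nat \<Rightarrow> real) \<Rightarrow> nat list \<Rightarrow> nat list \<Rightarrow> real" where
  "emp_gamma l t n m j \<omega> A B = (1 / real t) *
     (\<Sum>i<t. if block_in l A (i * n + 1) \<omega> \<and> block_in l B (i * n + j + m) \<omega> then 1 else 0)"

definition beta_hat :: "nat \<Rightarrow> nat \<Rightarrow> nat \<Rightarrow> (nat \<Rightarrow> real) \<Rightarrow> nat \<Rightarrow> real" where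
  "beta_hat l t n \<omega> m =
     Max ((\<lambda>j. (1/2) * (\<Sum>A\<in>dyadic_cubes j l. \<Sum>B\<in>dyadic_cubes (n - m - j + 1) l.
              \<bar>emp_gamma l t n m j \<omega> A B - emp_mu l t \<omega> A * emp_mu l t \<omega> B\<bar>)) ` {1..n - m})"

definition C_tilde :: "nat \<Rightarrow> nat \<Rightarrow> nat \<Rightarrow> real" where
  "C_tilde m l n = real m * 2 ^ (2 ^ (2 * n * l + 1) + 2 ^ (m * l + 1) + 2)"

definition tau_tilde :: "(nat \<Rightarrow> nat) \<Rightarrow> (nat \<Rightarrow> nat) \<Rightarrow> (nat \<Rightarrow> real) \<Rightarrow> (nat \<Rightarrow> real) \<Rightarrow> nat \<Rightarrow> nat \<Rightarrow> nat" where
  "tau_tilde ls ns eps dl t m =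
     nat \<lceil>C_tilde m (ls t) (ns t) / (real m * (eps t)\<^sup>2 * dl t)\<rceil>"

definition beta_hat_t :: "(nat \<Rightarrow> nat) \<Rightarrow> (nat \<Rightarrow> nat) \<Rightarrow> (nat \<Rightarrow> real) \<Rightarrow> (nat \<Rightarrow> real) \<Rightarrow> nat \<Rightarrow> (nat \<Rightarrow> real) \<Rightarrow> nat \<Rightarrow> real" where
  "beta_hat_t ls ns eps dl t \<omega> m =
     beta_hat (ls t) (tau_tilde ls ns eps dl t m) (ns t) \<omega> m"

definition test_g :: "(nat \<Rightarrow> real) \<Rightarrow> (nat \<Rightarrow> nat) \<Rightarrow> (nat \<Rightarrow> nat) \<Rightarrow> (nat \<Rightarrow> nat) \<Rightarrow> (nat \<Rightarrow> real) \<Rightarrow> (nat \<Rightarrow> real) \<Rightarrow> nat \<Rightarrow> (nat \<Rightarrow> real) \<Rightarrow> real" where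
  "test_g \<gamma> Ms ls ns eps dl t \<omega> =
     (if \<forall>m\<in>{1..Ms t}. beta_hat_t ls ns eps dl t \<omega> m \<le> \<gamma> m + eps t then 1 else -1)"

end

theory Submission
  imports Defs
begin


lemma space_Omega: "space Omega = {\<omega>. \<forall>i. \<omega> i \<in> {0..1}}"
  by (auto simp: Omega_def space_PiM PiE_def Pi_def)

lemma coord_space: "\<omega> \<in> space Omega \<Longrightarrow> coord t \<omega> \<in> {0..1}"
  by (simp add: space_Omega coord_def)

lemma coord_meas: "coord t \<in> borel_measurable Omega"
proof -
  have "(\<lambda>\<omega>. \<omega> (t-1)) \<in> measurable Omega (restrict_space borel {0..1::real})"
    unfolding Omega_def by (rule measurable_component_singleton) simp
  then have "(\<lambda>\<omega>. \<omega> (t-1)) \<in> borel_measurable Omega"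
    using measurable_restrict_space2_iff by blast
  then show ?thesis unfolding coord_def[abs_def] .
qed

definition gens :: "nat set \<Rightarrow> (nat \<Rightarrow> real) set set" where
  "gens T = (\<Union>t\<in>T. {coord t -` B \<inter> space Omega | B. B \<in> sets (borel :: real measure)})"

lemma gens_Pow: "gens T \<subseteq> Pow (space Omega)"
  by (auto simp: gens_def)

lemma gens_sets: "gens T \<subseteq> sets Omega"
  using measurable_sets[OF coord_meas] by (auto simp: gens_def)

lemma space_gen_alg: "space (gen_alg T) = space Omega"
  unfolding gen_alg_def using gens_Pow[of T] by (simp add: gens_def)

lemma sets_gen_alg: "sets (gen_alg T) = sigma_sets (space Omega) (gens T)"
  unfolding gen_alg_def using gens_Pow[of T] by (simp add: gens_def)

lemma gen_alg_sub: "sets (gen_alg T) \<subseteq> sets Omega"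
  unfolding sets_gen_alg using gens_sets by (rule sets.sigma_sets_subset)

lemma coord_in_gen:
  assumes "t \<in> T" "B \<in> sets borel"
  shows "{\<omega>\<in>space Omega. coord t \<omega> \<in> B} \<in> sets (gen_alg T)"
proof -
  have "{\<omega>\<in>space Omega. coord t \<omega> \<in> B} = coord t -` B \<inter> space Omega" by auto
  also have "\<dots> \<in> gens T" using assms unfolding gens_def by blast
  finally show ?thesis unfolding sets_gen_alg by (rule sigma_sets.Basic)
qed

lemma dyadic_borel: "dyadic_int l i \<in> sets borel"
  unfolding dyadic_int_def by auto

definition blk :: "nat \<Rightarrow> nat list \<Rightarrow> nat \<Rightarrow> (nat \<Rightarrow> real) set" where
  "blk l c s = {\<omega>\<in>space Omega. block_in l c s \<omega>}"

lemma blk_gen: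
  assumes "\<And>r. r < length c \<Longrightarrow> s + r \<in> T"
  shows "blk l c s \<in> sets (gen_alg T)"
proof -
  have "blk l c s = {\<omega>\<in>space (gen_alg T). \<forall>r\<in>{..<length c}. coord (s+r) \<omega> \<in> dyadic_int l (c!r)}"
    by (auto simp: blk_def block_in_def space_gen_alg)
  also have "\<dots> \<in> sets (gen_alg T)"
    by (intro sets.sets_Collect_finite_All) (auto simp: space_gen_alg intro!: coord_in_gen assms dyadic_borel)
  finally show ?thesis .
qed

lemma blk_sets: "blk l c s \<in> sets Omega"
  using blk_gen[of c s UNIV l] gen_alg_sub by blast

definition idx :: "nat \<Rightarrow> real \<Rightarrow> nat" where
  "idx l x = min (nat \<lfloor>x * 2^l\<rfloor>) (2^l - 1)"

lemma idx_lt: "idx l x < 2^l"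
  unfolding idx_def by (simp add: min.strict_coboundedI2)

lemma dyadic_idx:
  assumes x: "x \<in> {0..1}" and i: "i < 2^l"
  shows "x \<in> dyadic_int l i \<longleftrightarrow> idx l x = i"
proof -
  define y where "y = x * 2^l"
  have y0: "0 \<le> y" and y1: "y \<le> 2^l" using x by (auto simp: y_def)
  have xy: "x = y / 2^l" by (simp add: y_def)
  have p: "(0::real) < 2^l" by simp
  show ?thesis
  proof (cases "i = 2^l - 1")
    case True
    have "x \<in> dyadic_int l i \<longleftrightarrow> real i \<le> y"
      using True x y1 p unfolding dyadic_int_def xy
      by (auto simp: divide_simps of_nat_diff)
    also have "\<dots> \<longleftrightarrow> i \<le> nat \<lfloor>y\<rfloor>"
      by (metis le_nat_floor nat_le_real_less of_nat_floor floor_less_iff le_floor_iff of_int_of_nat_eq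
          nat_le_eq_zle y0 floor_of_nat le_nat_iff nat_0_le zero_le_floor)
    also have "\<dots> \<longleftrightarrow> idx l x = i"
      unfolding idx_def y_def[symmetric] using True by auto
    finally show ?thesis .
  next
    case False
    then have i2: "i < 2^l - 1" using i by linarith
    have "x \<in> dyadic_int l i \<longleftrightarrow> real i \<le> y \<and> y < real i + 1"
      using False p unfolding dyadic_int_def xy by (auto simp: divide_simps)
    also have "\<dots> \<longleftrightarrow> nat \<lfloor>y\<rfloor> = i"
      using y0 by (auto simp: nat_eq_iff floor_eq_iff)
    also have "\<dots> \<longleftrightarrow> idx l x = i"
      unfolding idx_def y_def[symmetric] using i2 by (auto simp: min_def)
    finally show ?thesis .
  qed
qed

lemma idx_bounds:
  assumes x: "x \<in> {0..1}"
  shows "real (idx l x) / 2^l \<le> x" "x \<le> (real (idx l x) + 1) / 2^l"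
proof -
  have "x \<in> dyadic_int l (idx l x)" using dyadic_idx[OF x idx_lt] by simp
  then show "real (idx l x) / 2^l \<le> x" "x \<le> (real (idx l x) + 1) / 2^l"
    unfolding dyadic_int_def by (auto split: if_splits)
qed

definition key :: "nat \<Rightarrow> nat \<Rightarrow> nat \<Rightarrow> (nat \<Rightarrow> real) \<Rightarrow> nat list" where
  "key l s k \<omega> = map (\<lambda>r. idx l (coord (s+r) \<omega>)) [0..<k]"

lemma dyadic_cubes_alt: "dyadic_cubes k l = {xs. set xs \<subseteq> {..<2^l} \<and> length xs = k}"
  by (auto simp: dyadic_cubes_def)

lemma finite_cubes: "finite (dyadic_cubes k l)"
  unfolding dyadic_cubes_alt by (rule finite_lists_length_eq) simp

lemma card_cubes: "card (dyadic_cubes k l) = 2 ^ (l * k)"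
  unfolding dyadic_cubes_alt by (subst card_lists_length_eq) (simp_all add: power_mult)

lemma key_cubes: "key l s k \<omega> \<in> dyadic_cubes k l"
  by (auto simp: key_def dyadic_cubes_def idx_lt)

lemma block_key:
  assumes "\<omega> \<in> space Omega" "c \<in> dyadic_cubes k l"
  shows "block_in l c s \<omega> \<longleftrightarrow> key l s k \<omega> = c"
proof -
  have len: "length c = k" using assms(2) by (simp add: dyadic_cubes_def)
  have "block_in l c s \<omega> \<longleftrightarrow> (\<forall>r<k. idx l (coord (s+r) \<omega>) = c!r)"
    unfolding block_in_def len using assms
    by (auto simp: dyadic_idx[OF coord_space] dyadic_cubes_def)
  also have "\<dots> \<longleftrightarrow> key l s k \<omega> = c"
    unfolding key_def using len by (auto simp: list_eq_iff_nth_eq)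
  finally show ?thesis .
qed




lemma shift_meas: "shift \<in> measurable Omega Omega"
proof -
  have "(\<lambda>\<omega> i. \<omega> (Suc i)) \<in> measurable Omega (Pi\<^sub>M UNIV (\<lambda>_. restrict_space borel {0..1::real}))"
  proof (rule measurable_PiM_single')
    fix i :: nat
    show "(\<lambda>\<omega>. \<omega> (Suc i)) \<in> measurable Omega (restrict_space borel {0..1::real})"
      unfolding Omega_def by (rule measurable_component_singleton) simp
  next
    show "(\<lambda>\<omega> i. \<omega> (Suc i)) \<in> space Omega \<rightarrow> (\<Pi>\<^sub>E i\<in>UNIV. space (restrict_space borel {0..1::real}))"
      by (auto simp: space_Omega space_restrict_space)
  qed
  then show ?thesis unfolding shift_def[abs_def] Omega_def[symmetric] .
qed

lemma abs_aux: "(a::real) \<le> 1 \<Longrightarrow> b \<le> 1 \<Longrightarrow> 0 \<le> a \<Longrightarrow> 0 \<le> b \<Longrightarrow> \<bar>a - b\<bar> \<le> 1"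
  by (simp add: abs_le_iff)

locale proc = prob_space M for M :: "(nat \<Rightarrow> real) measure" +
  assumes sets_M: "sets M = sets Omega"
begin

lemma space_M: "space M = space Omega"
  using sets_M by (rule sets_eq_imp_space_eq)

lemma blk_ev: "blk l c s \<in> events"
  using blk_sets sets_M by simp

lemma gen_ev: "A \<in> sets (gen_alg T) \<Longrightarrow> A \<in> events"
  using gen_alg_sub sets_M by auto

lemma subalg: "subalgebra M (gen_alg T)"
  unfolding subalgebra_def using gen_alg_sub sets_M space_M space_gen_alg by auto

lemma id_meas: "(\<lambda>x. x) \<in> measurable M (gen_alg T)"
  unfolding measurable_def
proof (safe)
  fix A assume "A \<in> sets (gen_alg T)"
  then have "A \<subseteq> space M" using sets.sets_into_space space_gen_alg space_M by metis
  then have "(\<lambda>x. x) -` A \<inter> space M = A" by auto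
  then show "(\<lambda>x. x) -` A \<inter> space M \<in> sets M" using gen_ev \<open>A \<in> sets (gen_alg T)\<close> by simp
qed (auto simp: space_M space_gen_alg)

definition Dm :: "nat set \<Rightarrow> nat set \<Rightarrow> ((nat \<Rightarrow> real) \<times> (nat \<Rightarrow> real)) measure" where
  "Dm T1 T2 = distr M (gen_alg T1 \<Otimes>\<^sub>M gen_alg T2) (\<lambda>\<omega>. (\<omega>, \<omega>))"

definition Pm :: "nat set \<Rightarrow> nat set \<Rightarrow> ((nat \<Rightarrow> real) \<times> (nat \<Rightarrow> real)) measure" where
  "Pm T1 T2 = restr_to_subalg M (gen_alg T1) \<Otimes>\<^sub>M restr_to_subalg M (gen_alg T2)"

lemma diag_meas: "(\<lambda>\<omega>. (\<omega>, \<omega>)) \<in> measurable M (gen_alg T1 \<Otimes>\<^sub>M gen_alg T2)"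
  using id_meas by (rule measurable_Pair) (rule id_meas)

lemma sets_Dm: "sets (Dm T1 T2) = sets (gen_alg T1 \<Otimes>\<^sub>M gen_alg T2)"
  by (simp add: Dm_def)

lemma sets_Pm: "sets (Pm T1 T2) = sets (gen_alg T1 \<Otimes>\<^sub>M gen_alg T2)"
  unfolding Pm_def by (intro sets_pair_measure_cong) (simp_all add: sets_restr_to_subalg subalg)

lemma prob_Dm: "prob_space (Dm T1 T2)"
  unfolding Dm_def by (rule prob_space_distr) (rule diag_meas)

lemma restr_prob: "prob_space (restr_to_subalg M (gen_alg T))"
  by (rule prob_space_restr_to_subalg[OF subalg]) (rule prob_space_axioms)

lemma measure_restr: "A \<in> sets (gen_alg T) \<Longrightarrow> measure (restr_to_subalg M (gen_alg T)) A = prob A"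
  unfolding measure_def by (simp add: emeasure_restr_to_subalg[OF subalg])

lemma emeasure_Pm_Times:
  assumes "E \<in> sets (gen_alg T1)" "F \<in> sets (gen_alg T2)"
  shows "emeasure (Pm T1 T2) (E \<times> F) = emeasure M E * emeasure M F"
proof -
  interpret R2: prob_space "restr_to_subalg M (gen_alg T2)" by (rule restr_prob)
  show ?thesis unfolding Pm_def
    using assms by (simp add: R2.emeasure_pair_measure_Times sets_restr_to_subalg[OF subalg]
       emeasure_restr_to_subalg[OF subalg])
qed

lemma measure_Pm_Times:
  assumes "E \<in> sets (gen_alg T1)" "F \<in> sets (gen_alg T2)"
  shows "measure (Pm T1 T2) (E \<times> F) = prob E * prob F"
  using emeasure_Pm_Times[OF assms] unfolding measure_def
  by (simp add: emeasure_eq_measure enn2real_mult)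

lemma space_Pm: "space (Pm T1 T2) = space Omega \<times> space Omega"
  unfolding Pm_def by (simp add: space_pair_measure space_restr_to_subalg space_M)

lemma space_Dm: "space (Dm T1 T2) = space Omega \<times> space Omega"
  unfolding Dm_def by (simp add: space_pair_measure space_gen_alg)

lemma prob_Pm: "prob_space (Pm T1 T2)"
proof (rule prob_spaceI)
  have "space Omega \<in> sets (gen_alg T1)" "space Omega \<in> sets (gen_alg T2)"
    using sets.top[of "gen_alg T1"] sets.top[of "gen_alg T2"] by (simp_all add: space_gen_alg)
  then show "emeasure (Pm T1 T2) (space (Pm T1 T2)) = 1"
    unfolding space_Pm using emeasure_space_1 space_M by (simp add: emeasure_Pm_Times)
qed

lemma measure_Dm_Times:
  assumes "E \<in> sets (gen_alg T1)" "F \<in> sets (gen_alg T2)"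
  shows "measure (Dm T1 T2) (E \<times> F) = prob (E \<inter> F)"
proof -
  have "measure (Dm T1 T2) (E \<times> F) = prob ((\<lambda>\<omega>. (\<omega>, \<omega>)) -` (E \<times> F) \<inter> space M)"
    unfolding Dm_def using assms by (intro measure_distr diag_meas) auto
  also have "(\<lambda>\<omega>. (\<omega>, \<omega>)) -` (E \<times> F) \<inter> space M = E \<inter> F"
    using assms sets.sets_into_space space_gen_alg space_M by fastforce
  finally show ?thesis .
qed

lemma beta_sub_eq: "beta_sub M (gen_alg T1) (gen_alg T2) =
   (SUP W\<in>sets (gen_alg T1 \<Otimes>\<^sub>M gen_alg T2). \<bar>measure (Dm T1 T2) W - measure (Pm T1 T2) W\<bar>)"
  unfolding beta_sub_def Dm_def Pm_def Let_def ..

lemma diff_le1: "\<bar>measure (Dm T1 T2) W - measure (Pm T1 T2) W\<bar> \<le> 1"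
proof -
  have a: "measure (Dm T1 T2) W \<le> 1" using prob_space.prob_le_1[OF prob_Dm] .
  have b: "measure (Pm T1 T2) W \<le> 1" using prob_space.prob_le_1[OF prob_Pm] .
  have c: "0 \<le> measure (Dm T1 T2) W" "0 \<le> measure (Pm T1 T2) W" by simp_all
  show ?thesis using abs_aux[OF a b c] .
qed

lemma beta_sub_upper:
  assumes "W \<in> sets (gen_alg T1 \<Otimes>\<^sub>M gen_alg T2)"
  shows "\<bar>measure (Dm T1 T2) W - measure (Pm T1 T2) W\<bar> \<le> beta_sub M (gen_alg T1) (gen_alg T2)"
  unfolding beta_sub_eq by (rule cSUP_upper[OF assms]) (auto intro!: bdd_aboveI[where M=1] diff_le1)

lemma beta_sub_nonneg: "0 \<le> beta_sub M (gen_alg T1) (gen_alg T2)"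
  using beta_sub_upper[of "{}" T1 T2] by simp

lemma beta_sub_le1: "beta_sub M (gen_alg T1) (gen_alg T2) \<le> 1"
  unfolding beta_sub_eq by (rule cSUP_least) (auto intro: diff_le1)

lemma beta_coef_upper: "1 \<le> j \<Longrightarrow> beta_sub M (gen_alg {1..j}) (gen_alg {j+m..}) \<le> beta_coef M m"
  unfolding beta_coef_def
  by (rule cSUP_upper[where f="\<lambda>j. beta_sub M (gen_alg {1..j}) (gen_alg {j+m..})"])
     (auto intro!: bdd_aboveI[where M=1] beta_sub_le1)

lemma beta_coef_nonneg: "0 \<le> beta_coef M m"
  using beta_coef_upper[of 1 m] beta_sub_nonneg[of "{1..1}" "{1+m..}"] by simp

lemma mixing:
  assumes "1 \<le> a" "E \<in> sets (gen_alg {1..a})" "F \<in> sets (gen_alg {a+g..})"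
  shows "\<bar>prob (E \<inter> F) - prob E * prob F\<bar> \<le> beta_coef M g"
proof -
  have "E \<times> F \<in> sets (gen_alg {1..a} \<Otimes>\<^sub>M gen_alg {a+g..})" using assms by auto
  from beta_sub_upper[OF this] beta_coef_upper[OF assms(1), of g]
  show ?thesis using assms by (simp add: measure_Dm_Times measure_Pm_Times)
qed

definition evk :: "((nat \<Rightarrow> real) \<Rightarrow> bool) \<Rightarrow> nat \<Rightarrow> (nat \<Rightarrow> real) set" where
  "evk Q k = {\<omega>\<in>space Omega. Q (\<lambda>i. \<omega> (i + k))}"

lemma stat_evk:
  assumes st: "stationary M" and ev: "\<And>k. evk Q k \<in> events"
  shows "prob (evk Q k) = prob (evk Q 0)"
proof (induction k)
  case (Suc k)
  have sm: "shift \<in> measurable M M"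
    using shift_meas by (simp add: measurable_cong_sets[OF sets_M sets_M])
  have "prob (evk Q k) = measure (distr M M shift) (evk Q k)"
    using st unfolding stationary_def by simp
  also have "\<dots> = prob (shift -` evk Q k \<inter> space M)"
    using ev by (intro measure_distr sm) auto
  also have "shift -` evk Q k \<inter> space M = evk Q (Suc k)"
    by (auto simp: evk_def space_M space_Omega shift_def)
  finally show ?case using Suc by simp
qed simp

lemma blk_evk:
  assumes "1 \<le> s" "1 \<le> s'"
  shows "blk l A (s+k) \<inter> blk l B (s'+k) =
    evk (\<lambda>\<psi>. (\<forall>r<length A. \<psi> (r + (s-1)) \<in> dyadic_int l (A!r)) \<and>
              (\<forall>r<length B. \<psi> (r + (s'-1)) \<in> dyadic_int l (B!r))) k"
proof -
  obtain a b where ab: "s = Suc a" "s' = Suc b" using assms by (cases s; cases s') auto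
  show ?thesis unfolding ab
    by (rule set_eqI) (simp add: blk_def evk_def block_in_def coord_def ac_simps)
qed

lemma stat_blk2:
  assumes st: "stationary M" "1 \<le> s" "1 \<le> s'"
  shows "prob (blk l A (s+k) \<inter> blk l B (s'+k)) = prob (blk l A s \<inter> blk l B s')"
proof -
  define Q where "Q = (\<lambda>\<psi>. (\<forall>r<length A. \<psi> (r + (s-1)) \<in> dyadic_int l (A!r)) \<and>
              (\<forall>r<length B. \<psi> (r + (s'-1)) \<in> dyadic_int l (B!r)))"
  have e: "\<And>k. blk l A (s+k) \<inter> blk l B (s'+k) = evk Q k"
    unfolding Q_def by (rule blk_evk[OF st(2,3)])
  have ev: "\<And>k. evk Q k \<in> events"
    unfolding e[symmetric] by (intro sets.Int blk_ev)
  have "prob (evk Q k) = prob (evk Q 0)" by (rule stat_evk[OF st(1) ev])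
  then show ?thesis using e[of k] e[of 0] by simp
qed

lemma blk_Nil: "blk l [] s = space Omega"
  by (auto simp: blk_def block_in_def)

lemma stat_blk1:
  assumes st: "stationary M" "1 \<le> s"
  shows "prob (blk l A (s+k)) = prob (blk l A s)"
proof -
  have e: "\<And>a b. blk l A a \<inter> blk l [] b = blk l A a" unfolding blk_Nil by (auto simp: blk_def)
  from stat_blk2[OF st(1,2) st(2), of l A k "[]"] show ?thesis unfolding e .
qed

end



lemma sum_inj_le:
  fixes c :: "nat \<Rightarrow> real"
  assumes "finite A" "inj_on h A" "h ` A \<subseteq> {1..N}" "\<And>d. 0 \<le> c d" "(\<Sum>d\<in>{1..N}. c d) \<le> B"
  shows "(\<Sum>k\<in>A. c (h k)) \<le> B"
proof -
  have "(\<Sum>k\<in>A. c (h k)) = (\<Sum>d\<in>h ` A. c d)" using assms(2) by (simp add: sum.reindex)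
  also have "\<dots> \<le> (\<Sum>d\<in>{1..N}. c d)" using assms(3,4) by (intro sum_mono2) auto
  finally show ?thesis using assms(5) by linarith
qed

lemma (in prob_space) conc:
  fixes E :: "nat \<Rightarrow> 'a set" and c :: "nat \<Rightarrow> real" and \<tau> :: nat
  assumes ev: "\<And>i. E i \<in> events" and pE: "\<And>i. prob (E i) = p"
    and cov: "\<And>i k. i < k \<Longrightarrow> \<bar>prob (E i \<inter> E k) - p^2\<bar> \<le> c (k - i)"
    and c0: "\<And>d. 0 \<le> c d" and csum: "\<And>N. (\<Sum>d\<in>{1..N}. c d) \<le> B"
    and \<tau>: "0 < \<tau>" and \<eta>: "0 < \<eta>"
  shows "prob {x\<in>space M. \<eta> \<le> \<bar>(1/real \<tau>) * (\<Sum>i<\<tau>. if x \<in> E i then 1 else 0) - p\<bar>}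
           \<le> (1 + 2*B) / (real \<tau> * \<eta>^2)"
proof -
  define f where "f i x = indicator (E i) x - p" for i x
  define Z where "Z x = (\<Sum>i<\<tau>. f i x)" for x
  have p01: "0 \<le> p" "p \<le> 1" using pE[of 0] by (metis measure_nonneg, metis prob_le_1)
  have ind_meas[measurable]: "(indicator (E i) :: 'a \<Rightarrow> real) \<in> borel_measurable M" for i
    using ev by simp
  have fmeas[measurable]: "f i \<in> borel_measurable M" for i unfolding f_def[abs_def] by simp
  have bnd: "\<bar>f i x\<bar> \<le> 1" for i x using p01 unfolding f_def by (auto simp: indicator_def)
  have int_ff: "integrable M (\<lambda>x. f i x * f k x)" for i k
  proof (rule integrable_const_bound[where B=1])
    show "AE x in M. norm (f i x * f k x) \<le> 1"
    proof (intro AE_I2)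
      fix x
      have "\<bar>f i x\<bar> * \<bar>f k x\<bar> \<le> 1" by (rule mult_le_one[OF bnd abs_ge_zero bnd])
      then show "norm (f i x * f k x) \<le> 1" by (simp add: abs_mult)
    qed
  qed simp
  have int_ind: "integrable M (indicator A :: 'a \<Rightarrow> real)" if "A \<in> events" for A
    by (rule integrable_const_bound[where B=1]) (use that in \<open>auto simp: indicator_def\<close>)
  have Eff: "integral\<^sup>L M (\<lambda>x. f i x * f k x) = prob (E i \<inter> E k) - p^2" for i k
  proof -
    have "(\<lambda>x. f i x * f k x) = (\<lambda>x. indicator (E i \<inter> E k) x - p * indicator (E i) x
              - p * indicator (E k) x + p^2)"
      by (auto simp: f_def indicator_def power2_eq_square algebra_simps)
    moreover have "integral\<^sup>L M (\<lambda>x. indicator (E i \<inter> E k) x - p * indicator (E i) x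
              - p * indicator (E k) x + p^2) = prob (E i \<inter> E k) - p * prob (E i) - p * prob (E k) + p^2"
      using ev int_ind
      by (simp add: integral_add integral_diff Int_absorb2 sets.sets_into_space prob_space
          sets.Int integrable_diff integrable_add)
    ultimately show ?thesis using pE by (simp add: power2_eq_square)
  qed
  have Z2: "(Z x)^2 = (\<Sum>i<\<tau>. \<Sum>k<\<tau>. f i x * f k x)" for x
    unfolding Z_def power2_eq_square by (simp add: sum_product)
  have intZ: "integral\<^sup>L M (\<lambda>x. (Z x)^2) = (\<Sum>i<\<tau>. \<Sum>k<\<tau>. prob (E i \<inter> E k) - p^2)"
    unfolding Z2 using int_ff by (simp add: integral_sum integrable_sum Eff)
  have rowbound: "(\<Sum>k<\<tau>. prob (E i \<inter> E k) - p^2) \<le> 1 + 2*B" if "i < \<tau>" for i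
  proof -
    have split: "{..<\<tau>} = {..<i} \<union> {i} \<union> {i<..<\<tau>}" using that by auto
    have "(\<Sum>k<\<tau>. prob (E i \<inter> E k) - p^2) =
          (\<Sum>k<i. prob (E i \<inter> E k) - p^2) + (prob (E i \<inter> E i) - p^2)
          + (\<Sum>k\<in>{i<..<\<tau>}. prob (E i \<inter> E k) - p^2)"
      unfolding split by (subst sum.union_disjoint; auto)+
    also have "(\<Sum>k<i. prob (E i \<inter> E k) - p^2) \<le> (\<Sum>k<i. c (i - k))"
    proof (rule sum_mono)
      fix k assume "k \<in> {..<i}"
      then have "\<bar>prob (E k \<inter> E i) - p^2\<bar> \<le> c (i - k)" by (intro cov) auto
      then show "prob (E i \<inter> E k) - p^2 \<le> c (i - k)" by (simp add: Int_commute)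
    qed
    also have "(\<Sum>k<i. c (i - k)) \<le> B"
    proof (rule sum_inj_le[where N=i, OF _ _ _ c0 csum[of i]])
      show "inj_on (\<lambda>k. i - k) {..<i}" by (rule inj_onI) simp
      show "(\<lambda>k. i - k) ` {..<i} \<subseteq> {1..i}" by (rule image_subsetI) simp
    qed simp
    also have "prob (E i \<inter> E i) - p^2 \<le> 1" using prob_le_1[of "E i"] zero_le_power2[of p]
      by (simp only: Int_absorb)
    also have "(\<Sum>k\<in>{i<..<\<tau>}. prob (E i \<inter> E k) - p^2) \<le> (\<Sum>k\<in>{i<..<\<tau>}. c (k - i))"
    proof (rule sum_mono)
      fix k assume "k \<in> {i<..<\<tau>}"
      then have "\<bar>prob (E i \<inter> E k) - p^2\<bar> \<le> c (k - i)" by (intro cov) auto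
      then show "prob (E i \<inter> E k) - p^2 \<le> c (k - i)" by (simp add: abs_le_iff)
    qed
    also have "(\<Sum>k\<in>{i<..<\<tau>}. c (k - i)) \<le> B"
    proof (rule sum_inj_le[where N=\<tau>, OF _ _ _ c0 csum[of \<tau>]])
      show "inj_on (\<lambda>k. k - i) {i<..<\<tau>}" by (rule inj_onI) (simp, linarith)
      show "(\<lambda>k. k - i) ` {i<..<\<tau>} \<subseteq> {1..\<tau>}" by (rule image_subsetI) (simp, linarith)
    qed simp
    finally show ?thesis by linarith
  qed
  have EZ: "integral\<^sup>L M (\<lambda>x. (Z x)^2) \<le> real \<tau> * (1 + 2*B)"
  proof -
    have "(\<Sum>i<\<tau>. \<Sum>k<\<tau>. prob (E i \<inter> E k) - p^2) \<le> (\<Sum>i<\<tau>. 1 + 2*B)"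
      by (rule sum_mono) (simp add: rowbound)
    then show ?thesis using intZ by simp
  qed
  have intZ2: "integrable M (\<lambda>x. (Z x)^2)" unfolding Z2 using int_ff by (simp add: integrable_sum)
  have pos: "0 < (real \<tau> * \<eta>)^2" using \<tau> \<eta> by simp
  have sub: "{x\<in>space M. \<eta> \<le> \<bar>(1/real \<tau>) * (\<Sum>i<\<tau>. if x \<in> E i then 1 else 0) - p\<bar>}
        \<subseteq> {x\<in>space M. (real \<tau> * \<eta>)^2 \<le> (Z x)^2}"
  proof safe
    fix x assume x: "x \<in> space M" and h: "\<eta> \<le> \<bar>(1/real \<tau>) * (\<Sum>i<\<tau>. if x \<in> E i then 1 else 0) - p\<bar>"
    have si: "(\<Sum>i<\<tau>. if x \<in> E i then 1 else 0) = (\<Sum>i<\<tau>. indicator (E i) x :: real)"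
      by (rule sum.cong) (auto simp: indicator_def)
    have "Z x = (\<Sum>i<\<tau>. if x \<in> E i then 1 else 0) - real \<tau> * p"
      unfolding si Z_def f_def sum_subtractf by simp
    then have "(1/real \<tau>) * (\<Sum>i<\<tau>. if x \<in> E i then 1 else 0) - p = Z x / real \<tau>"
      using \<tau> by (simp add: field_simps)
    with h have "\<eta> \<le> \<bar>Z x\<bar> / real \<tau>" by simp
    then have "real \<tau> * \<eta> \<le> \<bar>Z x\<bar>" using \<tau> by (simp add: field_simps)
    then have "(real \<tau> * \<eta>)^2 \<le> \<bar>Z x\<bar>^2"
      using \<tau> \<eta> by (intro power_mono) auto
    then show "(real \<tau> * \<eta>)^2 \<le> (Z x)^2" by simp
  qed
  have "prob {x\<in>space M. \<eta> \<le> \<bar>(1/real \<tau>) * (\<Sum>i<\<tau>. if x \<in> E i then 1 else 0) - p\<bar>}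
        \<le> prob {x\<in>space M. (real \<tau> * \<eta>)^2 \<le> (Z x)^2}"
  proof (rule finite_measure_mono[OF sub])
    have "(\<lambda>x. (Z x)^2) \<in> borel_measurable M" unfolding Z_def by simp
    then show "{x\<in>space M. (real \<tau> * \<eta>)^2 \<le> (Z x)^2} \<in> events" by measurable
  qed
  also have "\<dots> \<le> integral\<^sup>L M (\<lambda>x. (Z x)^2) / (real \<tau> * \<eta>)^2"
    by (rule integral_Markov_inequality_measure[OF intZ2 sets.top]) (use pos in auto)
  also have "\<dots> \<le> real \<tau> * (1 + 2*B) / (real \<tau> * \<eta>)^2"
    using EZ pos by (simp add: divide_right_mono)
  also have "\<dots> = (1 + 2*B) / (real \<tau> * \<eta>^2)"
    using \<tau> \<eta> by (simp add: power2_eq_square field_simps)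
  finally show ?thesis .
qed




definition sd :: "'a set \<Rightarrow> 'a set \<Rightarrow> 'a set" where "sd A B = (A - B) \<union> (B - A)"

definition apx :: "'a measure \<Rightarrow> 'a measure \<Rightarrow> (nat \<Rightarrow> nat \<Rightarrow> 'c set \<Rightarrow> 'a set) \<Rightarrow> 'a set \<Rightarrow> bool" where
  "apx M1 M2 R W \<longleftrightarrow> (\<forall>e>0. \<exists>L N. \<forall>l\<ge>L. \<forall>n\<ge>N. \<exists>Sc.
      measure M1 (sd W (R l n Sc)) < e \<and> measure M2 (sd W (R l n Sc)) < e)"

lemma union_approx_step:
  fixes M :: "'a measure"
  assumes fm: "finite_measure M" and A: "\<And>i. A i \<in> sets M" and Rs: "\<And>i. Rs i \<in> sets M"
    and k: "0 < k" and tail: "measure M (\<Union>i. A i) - measure M (\<Union>i<k. A i) < e/2"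
    and each: "\<And>i. i < k \<Longrightarrow> measure M (sd (A i) (Rs i)) < e / (2 * real k)"
  shows "measure M (sd (\<Union>i. A i) (\<Union>i<k. Rs i)) < e"
proof -
  interpret finite_measure M by (rule fm)
  have sub: "sd (\<Union>i. A i) (\<Union>i<k. Rs i) \<subseteq> ((\<Union>i. A i) - (\<Union>i<k. A i)) \<union> (\<Union>i<k. sd (A i) (Rs i))"
    unfolding sd_def by blast
  have m1: "(\<Union>i. A i) \<in> sets M" "(\<Union>i<k. A i) \<in> sets M" using A by auto
  have m2: "sd (A i) (Rs i) \<in> sets M" for i using A Rs unfolding sd_def by auto
  have "measure M (sd (\<Union>i. A i) (\<Union>i<k. Rs i))
     \<le> measure M (((\<Union>i. A i) - (\<Union>i<k. A i)) \<union> (\<Union>i<k. sd (A i) (Rs i)))"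
    by (rule finite_measure_mono[OF sub]) (use m1 m2 in auto)
  also have "\<dots> \<le> measure M ((\<Union>i. A i) - (\<Union>i<k. A i)) + measure M (\<Union>i<k. sd (A i) (Rs i))"
    by (rule measure_Un_le) (use m1 m2 in auto)
  also have "measure M ((\<Union>i. A i) - (\<Union>i<k. A i)) = measure M (\<Union>i. A i) - measure M (\<Union>i<k. A i)"
    by (rule finite_measure_Diff) (use m1 in auto)
  also have "measure M (\<Union>i<k. sd (A i) (Rs i)) \<le> (\<Sum>i<k. measure M (sd (A i) (Rs i)))"
    by (rule measure_UNION_le) (use m2 in auto)
  also have "(\<Sum>i<k. measure M (sd (A i) (Rs i))) < (\<Sum>i<k. e / (2 * real k))"
    by (rule sum_strict_mono) (use k each in auto)
  also have "(\<Sum>i<k. e / (2 * real k)) = e/2" using k by simp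
  finally show ?thesis using tail by linarith
qed

lemma approx_sigma:
  fixes R :: "nat \<Rightarrow> nat \<Rightarrow> 'c set \<Rightarrow> 'a set"
  assumes M1: "finite_measure M1" and M2: "finite_measure M2"
    and sets1: "sets M1 = sigma_sets \<Omega> G" and sets2: "sets M2 = sigma_sets \<Omega> G"
    and GP: "G \<subseteq> Pow \<Omega>"
    and Rsets: "\<And>l n Sc. R l n Sc \<in> sigma_sets \<Omega> G"
    and Rcompl: "\<And>l n Sc. R l n (- Sc) = \<Omega> - R l n Sc"
    and RUN: "\<And>l n (I::nat set) Sc. R l n (\<Union>i\<in>I. Sc i) = (\<Union>i\<in>I. R l n (Sc i))"
    and basic: "\<And>a. a \<in> G \<Longrightarrow> apx M1 M2 R a"
    and W: "W \<in> sigma_sets \<Omega> G"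
  shows "apx M1 M2 R W"
  using W
proof (induction rule: sigma_sets.induct)
  case (Basic a)
  then show ?case by (rule basic)
next
  case Empty
  have "R l n {} = {}" for l n using RUN[where l=l and n=n and I="{}"] by simp
  then show ?case unfolding apx_def sd_def by (intro allI impI exI[of _ 0] exI[of _ "{}"]) auto
next
  case (Compl a)
  have aO: "a \<subseteq> \<Omega>" using sigma_sets_into_sp[OF GP Compl.hyps] .
  have RO: "R l n Sc \<subseteq> \<Omega>" for l n Sc using sigma_sets_into_sp[OF GP Rsets] .
  have eq: "sd (\<Omega> - a) (R l n (- Sc)) = sd a (R l n Sc)" for l n Sc
    unfolding Rcompl sd_def using aO RO[of l n Sc] by blast
  show ?case using Compl.IH unfolding apx_def eq[symmetric]
    by (metis eq)
next
  case (Union A)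
  interpret F1: finite_measure M1 by (rule M1)
  interpret F2: finite_measure M2 by (rule M2)
  have A1: "A i \<in> sets M1" and A2: "A i \<in> sets M2" for i using Union.hyps sets1 sets2 by auto
  have R1: "R l n Sc \<in> sets M1" and R2: "R l n Sc \<in> sets M2" for l n Sc using Rsets sets1 sets2 by auto
  show ?case unfolding apx_def
  proof (intro allI impI)
    fix e :: real assume e: "0 < e"
    have un: "(\<Union>k. \<Union>i<k. A i) = (\<Union>i. A i)" by blast
    have inc: "incseq (\<lambda>k. \<Union>i<k. A i)" unfolding incseq_def by (intro allI impI UN_mono) auto
    have lim1: "(\<lambda>k. measure M1 (\<Union>i<k. A i)) \<longlonglongrightarrow> measure M1 (\<Union>i. A i)"
      using F1.finite_Lim_measure_incseq[OF _ inc] A1 un by auto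
    have lim2: "(\<lambda>k. measure M2 (\<Union>i<k. A i)) \<longlonglongrightarrow> measure M2 (\<Union>i. A i)"
      using F2.finite_Lim_measure_incseq[OF _ inc] A2 un by auto
    have "eventually (\<lambda>k. dist (measure M1 (\<Union>i<k. A i)) (measure M1 (\<Union>i. A i)) < e/2) sequentially"
      using tendstoD[OF lim1, of "e/2"] e by simp
    moreover have "eventually (\<lambda>k. dist (measure M2 (\<Union>i<k. A i)) (measure M2 (\<Union>i. A i)) < e/2) sequentially"
      using tendstoD[OF lim2, of "e/2"] e by simp
    moreover have "eventually (\<lambda>k. 0 < k) sequentially" by (rule eventually_gt_at_top)
    ultimately have "eventually (\<lambda>k. 0 < k \<and> dist (measure M1 (\<Union>i<k. A i)) (measure M1 (\<Union>i. A i)) < e/2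
         \<and> dist (measure M2 (\<Union>i<k. A i)) (measure M2 (\<Union>i. A i)) < e/2) sequentially"
      by eventually_elim auto
    then obtain N0 where N0: "\<forall>k\<ge>N0. 0 < k \<and> dist (measure M1 (\<Union>i<k. A i)) (measure M1 (\<Union>i. A i)) < e/2
         \<and> dist (measure M2 (\<Union>i<k. A i)) (measure M2 (\<Union>i. A i)) < e/2"
      unfolding eventually_sequentially by blast
    define k where "k = N0"
    have k: "0 < k" and t1: "dist (measure M1 (\<Union>i<k. A i)) (measure M1 (\<Union>i. A i)) < e/2"
      and t2: "dist (measure M2 (\<Union>i<k. A i)) (measure M2 (\<Union>i. A i)) < e/2"
      using N0 unfolding k_def by auto
    have t1': "measure M1 (\<Union>i. A i) - measure M1 (\<Union>i<k. A i) < e/2" using t1 unfolding dist_real_def abs_less_iff by linarith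
    have t2': "measure M2 (\<Union>i. A i) - measure M2 (\<Union>i<k. A i) < e/2" using t2 unfolding dist_real_def abs_less_iff by linarith
    define e' where "e' = e / (2 * real k)"
    have e': "0 < e'" using e k by (simp add: e'_def)
    have "\<forall>i. \<exists>LN. \<forall>l\<ge>fst LN. \<forall>n\<ge>snd LN. \<exists>Sc.
        measure M1 (sd (A i) (R l n Sc)) < e' \<and> measure M2 (sd (A i) (R l n Sc)) < e'"
    proof
      fix i
      from Union.IH[of i] e' obtain L N where "\<forall>l\<ge>L. \<forall>n\<ge>N. \<exists>Sc.
        measure M1 (sd (A i) (R l n Sc)) < e' \<and> measure M2 (sd (A i) (R l n Sc)) < e'"
        unfolding apx_def by blast
      then show "\<exists>LN. \<forall>l\<ge>fst LN. \<forall>n\<ge>snd LN. \<exists>Sc.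
        measure M1 (sd (A i) (R l n Sc)) < e' \<and> measure M2 (sd (A i) (R l n Sc)) < e'"
        by (intro exI[of _ "(L, N)"]) simp
    qed
    from choice[OF this] obtain LN where LN0: "\<forall>i. \<forall>l\<ge>fst (LN i). \<forall>n\<ge>snd (LN i). \<exists>Sc.
        measure M1 (sd (A i) (R l n Sc)) < e' \<and> measure M2 (sd (A i) (R l n Sc)) < e'"
      by blast
    have LN: "\<And>i l n. l \<ge> fst (LN i) \<Longrightarrow> n \<ge> snd (LN i) \<Longrightarrow> \<exists>Sc.
        measure M1 (sd (A i) (R l n Sc)) < e' \<and> measure M2 (sd (A i) (R l n Sc)) < e'"
      using LN0 by blast
    show "\<exists>L N. \<forall>l\<ge>L. \<forall>n\<ge>N. \<exists>Sc. measure M1 (sd (\<Union>i. A i) (R l n Sc)) < e \<and>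
                              measure M2 (sd (\<Union>i. A i) (R l n Sc)) < e"
    proof -
    define L0 where "L0 = (\<Sum>i<k. fst (LN i))"
    define N0 where "N0 = (\<Sum>i<k. snd (LN i))"
    have "\<forall>l\<ge>L0. \<forall>n\<ge>N0. \<exists>Sc. measure M1 (sd (\<Union>i. A i) (R l n Sc)) < e \<and>
                              measure M2 (sd (\<Union>i. A i) (R l n Sc)) < e"
    proof (intro allI impI)
      fix l n assume l: "L0 \<le> l" and n: "N0 \<le> n"
      have "\<forall>i. \<exists>Sc. i < k \<longrightarrow> measure M1 (sd (A i) (R l n Sc)) < e' \<and> measure M2 (sd (A i) (R l n Sc)) < e'"
      proof
        fix i show "\<exists>Sc. i < k \<longrightarrow> measure M1 (sd (A i) (R l n Sc)) < e' \<and> measure M2 (sd (A i) (R l n Sc)) < e'"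
        proof (cases "i < k")
          case True
          have "fst (LN i) \<le> (\<Sum>i<k. fst (LN i))" "snd (LN i) \<le> (\<Sum>i<k. snd (LN i))"
            using True by (auto intro!: member_le_sum)
          then have "fst (LN i) \<le> l" "snd (LN i) \<le> n" using l n unfolding L0_def N0_def by linarith+
          then show ?thesis using LN[of i l n] by blast
        qed simp
      qed
      from choice[OF this] obtain Sc where Sc0: "\<forall>i. i < k \<longrightarrow> measure M1 (sd (A i) (R l n (Sc i))) < e' \<and>
              measure M2 (sd (A i) (R l n (Sc i))) < e'"
        by blast
      have Sc: "\<And>i. i < k \<Longrightarrow> measure M1 (sd (A i) (R l n (Sc i))) < e' \<and>
              measure M2 (sd (A i) (R l n (Sc i))) < e'" using Sc0 by blast
      have RU: "R l n (\<Union>i<k. Sc i) = (\<Union>i<k. R l n (Sc i))" by (rule RUN)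
      have g1: "measure M1 (sd (\<Union>i. A i) (R l n (\<Union>i<k. Sc i))) < e"
          unfolding RU by (rule union_approx_step[OF M1 A1 R1 k t1']) (use Sc e'_def in auto)
      have g2: "measure M2 (sd (\<Union>i. A i) (R l n (\<Union>i<k. Sc i))) < e"
          unfolding RU by (rule union_approx_step[OF M2 A2 R2 k t2']) (use Sc e'_def in auto)
      from g1 g2 show "\<exists>Sc. measure M1 (sd (\<Union>i. A i) (R l n Sc)) < e \<and> measure M2 (sd (\<Union>i. A i) (R l n Sc)) < e"
        by blast
    qed
    then show ?thesis by blast
    qed
  qed
qed




definition Om :: "((nat \<Rightarrow> real) \<times> (nat \<Rightarrow> real)) set" where
  "Om = space Omega \<times> space Omega"

definition RR :: "nat \<Rightarrow> nat \<Rightarrow> nat \<Rightarrow> nat \<Rightarrow> (nat list \<times> nat list) set \<Rightarrow> ((nat \<Rightarrow> real) \<times> (nat \<Rightarrow> real)) set" where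
  "RR j m l n Sc = {p\<in>Om. (key l 1 j (fst p), key l (j+m) (n-m-j+1) (snd p)) \<in> Sc}"

definition GG :: "nat \<Rightarrow> nat \<Rightarrow> ((nat \<Rightarrow> real) \<times> (nat \<Rightarrow> real)) set set" where
  "GG j m = {{p\<in>Om. coord t (fst p) \<le> a} | t a. t \<in> {1..j}} \<union> {{p\<in>Om. coord t (snd p) \<le> a} | t a. j+m \<le> t}"

lemma GG_Pow: "GG j m \<subseteq> Pow Om" by (auto simp: GG_def)

lemma mem_blk_key: "\<omega> \<in> space Omega \<Longrightarrow> A \<in> dyadic_cubes k l \<Longrightarrow> \<omega> \<in> blk l A s \<longleftrightarrow> key l s k \<omega> = A"
  unfolding blk_def using block_key by blast

lemma RR_union: "RR j m l n Sc =
   (\<Union>AB\<in>Sc \<inter> (dyadic_cubes j l \<times> dyadic_cubes (n-m-j+1) l). blk l (fst AB) 1 \<times> blk l (snd AB) (j+m))"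
proof (rule set_eqI)
  fix p :: "(nat \<Rightarrow> real) \<times> (nat \<Rightarrow> real)"
  obtain x y where p: "p = (x, y)" by (cases p)
  show "p \<in> RR j m l n Sc \<longleftrightarrow>
     p \<in> (\<Union>AB\<in>Sc \<inter> (dyadic_cubes j l \<times> dyadic_cubes (n-m-j+1) l). blk l (fst AB) 1 \<times> blk l (snd AB) (j+m))"
  proof
    assume "p \<in> RR j m l n Sc"
    then have xy: "x \<in> space Omega" "y \<in> space Omega" and s: "(key l 1 j x, key l (j+m) (n-m-j+1) y) \<in> Sc"
      by (auto simp: RR_def Om_def p)
    have "x \<in> blk l (key l 1 j x) 1" using mem_blk_key[OF xy(1) key_cubes] by simp
    moreover have "y \<in> blk l (key l (j+m) (n-m-j+1) y) (j+m)" using mem_blk_key[OF xy(2) key_cubes] by simp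
    ultimately show "p \<in> (\<Union>AB\<in>Sc \<inter> (dyadic_cubes j l \<times> dyadic_cubes (n-m-j+1) l). blk l (fst AB) 1 \<times> blk l (snd AB) (j+m))"
      using s key_cubes unfolding p by (intro UN_I[of "(key l 1 j x, key l (j+m) (n-m-j+1) y)"]) auto
  next
    assume "p \<in> (\<Union>AB\<in>Sc \<inter> (dyadic_cubes j l \<times> dyadic_cubes (n-m-j+1) l). blk l (fst AB) 1 \<times> blk l (snd AB) (j+m))"
    then obtain A B where AB: "(A, B) \<in> Sc" "A \<in> dyadic_cubes j l" "B \<in> dyadic_cubes (n-m-j+1) l"
      and x: "x \<in> blk l A 1" and y: "y \<in> blk l B (j+m)" unfolding p by auto
    have xy: "x \<in> space Omega" "y \<in> space Omega" using x y by (auto simp: blk_def)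
    have "key l 1 j x = A" using mem_blk_key[OF xy(1) AB(2)] x by simp
    moreover have "key l (j+m) (n-m-j+1) y = B" using mem_blk_key[OF xy(2) AB(3)] y by simp
    ultimately show "p \<in> RR j m l n Sc" using AB xy by (simp add: RR_def Om_def p)
  qed
qed

lemma key_nth: "r < k \<Longrightarrow> key l s k \<omega> ! r = idx l (coord (s+r) \<omega>)"
  unfolding key_def by (simp del: upt_Suc)

lemma RR_compl: "RR j m l n (- Sc) = Om - RR j m l n Sc"
  by (auto simp: RR_def)

lemma RR_UN: "RR j m l n (\<Union>i\<in>I. Sc i) = (\<Union>i\<in>I. RR j m l n (Sc i))"
  by (auto simp: RR_def)

lemma space_pairgen: "space (gen_alg T1 \<Otimes>\<^sub>M gen_alg T2) = Om"
  by (simp add: space_pair_measure space_gen_alg Om_def)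

lemma RR_sets:
  assumes "1 \<le> j"
  shows "RR j m l n Sc \<in> sets (gen_alg {1..j} \<Otimes>\<^sub>M gen_alg {j+m..})"
proof -
  have fin: "finite (Sc \<inter> (dyadic_cubes j l \<times> dyadic_cubes (n-m-j+1) l))"
    by (intro finite_Int disjI2 finite_cartesian_product finite_cubes)
  show ?thesis unfolding RR_union
  proof (rule sets.finite_UN[OF fin])
    fix AB assume AB: "AB \<in> Sc \<inter> (dyadic_cubes j l \<times> dyadic_cubes (n-m-j+1) l)"
    then have la: "length (fst AB) = j" by (auto simp: dyadic_cubes_def)
    have "blk l (fst AB) 1 \<in> sets (gen_alg {1..j})" by (rule blk_gen) (use la in auto)
    moreover have "blk l (snd AB) (j+m) \<in> sets (gen_alg {j+m..})" by (rule blk_gen) auto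
    ultimately show "blk l (fst AB) 1 \<times> blk l (snd AB) (j+m) \<in> sets (gen_alg {1..j} \<Otimes>\<^sub>M gen_alg {j+m..})"
      by auto
  qed
qed

lemma GG_sets: "GG j m \<subseteq> sets (gen_alg {1..j} \<Otimes>\<^sub>M gen_alg {j+m..})"
proof
  fix X assume "X \<in> GG j m"
  then consider t a where "t \<in> {1..j}" "X = {p\<in>Om. coord t (fst p) \<le> a}"
    | t a where "j+m \<le> t" "X = {p\<in>Om. coord t (snd p) \<le> a}"
    unfolding GG_def by blast
  then show "X \<in> sets (gen_alg {1..j} \<Otimes>\<^sub>M gen_alg {j+m..})"
  proof cases
    case 1
    have "X = {\<omega>\<in>space Omega. coord t \<omega> \<in> {..a}} \<times> space Omega" using 1 by (auto simp: Om_def)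
    moreover have "{\<omega>\<in>space Omega. coord t \<omega> \<in> {..a}} \<in> sets (gen_alg {1..j})"
      using 1 by (intro coord_in_gen) auto
    moreover have "space Omega \<in> sets (gen_alg {j+m..})" using sets.top[of "gen_alg {j+m..}"] by (simp add: space_gen_alg)
    ultimately show ?thesis by auto
  next
    case 2
    have "X = space Omega \<times> {\<omega>\<in>space Omega. coord t \<omega> \<in> {..a}}" using 2 by (auto simp: Om_def)
    moreover have "{\<omega>\<in>space Omega. coord t \<omega> \<in> {..a}} \<in> sets (gen_alg {j+m..})"
      using 2 by (intro coord_in_gen) auto
    moreover have "space Omega \<in> sets (gen_alg {1..j})" using sets.top[of "gen_alg {1..j}"] by (simp add: space_gen_alg)
    ultimately show ?thesis by auto
  qed
qed

lemma meas_to_gen: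
  assumes fmeas: "\<And>t a. t \<in> T \<Longrightarrow> {w\<in>space Mg. coord t (f w) \<le> a} \<in> sets Mg"
    and fsp: "f \<in> space Mg \<rightarrow> space Omega"
  shows "f \<in> measurable Mg (gen_alg T)"
  unfolding gen_alg_def
proof (rule measurable_measure_of)
  show "(\<Union>t\<in>T. {coord t -` B \<inter> space Omega |B. B \<in> sets borel}) \<subseteq> Pow (space Omega)" by auto
  show "f \<in> space Mg \<rightarrow> space Omega" by (rule fsp)
  fix Y assume "Y \<in> (\<Union>t\<in>T. {coord t -` B \<inter> space Omega |B. B \<in> sets borel})"
  then obtain t B where t: "t \<in> T" "B \<in> sets borel" and Y: "Y = coord t -` B \<inter> space Omega" by blast
  have "(\<lambda>w. coord t (f w)) \<in> borel_measurable Mg"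
    unfolding borel_measurable_iff_le using fmeas[OF t(1)] by blast
  then have "(\<lambda>w. coord t (f w)) -` B \<inter> space Mg \<in> sets Mg" using t(2) by (rule measurable_sets)
  moreover have "f -` Y \<inter> space Mg = (\<lambda>w. coord t (f w)) -` B \<inter> space Mg" using fsp Y by auto
  ultimately show "f -` Y \<inter> space Mg \<in> sets Mg" by simp
qed

lemma sets_pairgen: "sets (gen_alg {1..j} \<Otimes>\<^sub>M gen_alg {j+m..}) = sigma_sets Om (GG j m)"
proof
  show "sigma_sets Om (GG j m) \<subseteq> sets (gen_alg {1..j} \<Otimes>\<^sub>M gen_alg {j+m..})"
    using sets.sigma_sets_subset[OF GG_sets] by (simp add: space_pairgen)
  define Mg where "Mg = sigma Om (GG j m)"
  have spMg: "space Mg = Om" unfolding Mg_def using GG_Pow by simp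
  have setsMg: "sets Mg = sigma_sets Om (GG j m)" unfolding Mg_def using GG_Pow by simp
  have "fst \<in> measurable Mg (gen_alg {1..j})"
  proof (rule meas_to_gen)
    fix t a assume "t \<in> {1..j}"
    then have "{w\<in>space Mg. coord t (fst w) \<le> a} \<in> GG j m" unfolding spMg GG_def by blast
    then show "{w\<in>space Mg. coord t (fst w) \<le> a} \<in> sets Mg" unfolding setsMg by (rule sigma_sets.Basic)
  qed (auto simp: spMg Om_def)
  moreover have "snd \<in> measurable Mg (gen_alg {j+m..})"
  proof (rule meas_to_gen)
    fix t a assume "t \<in> {j+m..}"
    then have "{w\<in>space Mg. coord t (snd w) \<le> a} \<in> GG j m" unfolding spMg GG_def by auto
    then show "{w\<in>space Mg. coord t (snd w) \<le> a} \<in> sets Mg" unfolding setsMg by (rule sigma_sets.Basic)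
  qed (auto simp: spMg Om_def)
  ultimately have idm: "(\<lambda>x. x) \<in> measurable Mg (gen_alg {1..j} \<Otimes>\<^sub>M gen_alg {j+m..})"
    unfolding measurable_pair_iff by (simp add: comp_def)
  show "sets (gen_alg {1..j} \<Otimes>\<^sub>M gen_alg {j+m..}) \<subseteq> sigma_sets Om (GG j m)"
  proof
    fix X assume X: "X \<in> sets (gen_alg {1..j} \<Otimes>\<^sub>M gen_alg {j+m..})"
    have "(\<lambda>x. x) -` X \<inter> space Mg \<in> sets Mg" by (rule measurable_sets[OF idm X])
    moreover have "X \<subseteq> Om" using sets.sets_into_space[OF X] by (simp add: space_pairgen)
    ultimately show "X \<in> sigma_sets Om (GG j m)" using spMg setsMg by (simp add: Int_absorb2)
  qed
qed

context proc
begin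

lemma shrink:
  "\<exists>L. \<forall>l\<ge>L. prob {\<omega>\<in>space Omega. coord t \<omega> \<in> {a0<..a0 + 1/2^l}} < e" if e: "0 < e"
proof -
  define E where "E l = {\<omega>\<in>space Omega. coord t \<omega> \<in> {a0<..a0 + 1/2^l}}" for l :: nat
  have ev: "E l \<in> events" for l
    unfolding E_def using coord_meas[of t] sets_M by (auto intro!: measurable_sets)
  have dec: "decseq E"
  proof (rule decseq_SucI)
    fix l :: nat
    have "(1::real)/2^(Suc l) \<le> 1/2^l" by (simp add: divide_simps)
    then show "E (Suc l) \<subseteq> E l" unfolding E_def by auto
  qed
  have empty: "(\<Inter>l. E l) = {}"
  proof safe
    fix x assume x: "x \<in> (\<Inter>l. E l)"
    then have g: "a0 < coord t x" using E_def by auto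
    obtain l :: nat where "(1/2::real)^l < coord t x - a0" using real_arch_pow_inv[of "coord t x - a0" "1/2"] g by auto
    moreover have "coord t x \<le> a0 + 1/2^l" using x E_def by auto
    ultimately show "x \<in> {}" by (simp add: power_one_over)
  qed
  have "(\<lambda>l. prob (E l)) \<longlonglongrightarrow> prob (\<Inter>l. E l)"
    by (rule finite_Lim_measure_decseq) (use ev dec in auto)
  then have "(\<lambda>l. prob (E l)) \<longlonglongrightarrow> 0" using empty by simp
  from tendstoD[OF this e] obtain L where "\<forall>l\<ge>L. dist (prob (E l)) 0 < e"
    unfolding eventually_sequentially by blast
  then show ?thesis unfolding E_def[symmetric] by auto
qed

lemma idx_coord_bounds:
  assumes "\<omega> \<in> space Omega"
  shows "real (idx l (coord t \<omega>)) / 2^l \<le> coord t \<omega>" "coord t \<omega> \<le> real (idx l (coord t \<omega>)) / 2^l + 1/2^l"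
  using idx_bounds[OF coord_space[OF assms]] by (auto simp: add_divide_distrib)

lemma basic_fst:
  assumes t: "t \<in> {1..j}"
  shows "apx (Dm {1..j} {j+m..}) (Pm {1..j} {j+m..}) (RR j m) {p\<in>Om. coord t (fst p) \<le> a0}"
  unfolding apx_def
proof (intro allI impI)
  fix e :: real assume e: "0 < e"
  define E where "E l = {\<omega>\<in>space Omega. coord t \<omega> \<in> {a0<..a0 + 1/2^l}}" for l :: nat
  obtain L where L: "\<And>l. l \<ge> L \<Longrightarrow> prob (E l) < e" using shrink[OF e, of t a0] unfolding E_def by blast
  have Eg: "E l \<in> sets (gen_alg {1..j})" for l unfolding E_def using t by (intro coord_in_gen) auto
  have Sg: "space Omega \<in> sets (gen_alg {j+m..})" using sets.top[of "gen_alg {j+m..}"] by (simp add: space_gen_alg)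
  have "\<forall>l\<ge>L. \<forall>n\<ge>0. \<exists>Sc. measure (Dm {1..j} {j+m..}) (sd {p\<in>Om. coord t (fst p) \<le> a0} (RR j m l n Sc)) < e \<and>
       measure (Pm {1..j} {j+m..}) (sd {p\<in>Om. coord t (fst p) \<le> a0} (RR j m l n Sc)) < e"
  proof (intro allI impI)
    fix l n :: nat assume l: "L \<le> l"
    define Sc where "Sc = {AB :: nat list \<times> nat list. real (fst AB ! (t-1)) / 2^l \<le> a0}"
    have tj: "t - 1 < j" "1 + (t - 1) = t" using t by auto
    have RR: "RR j m l n Sc = {p\<in>Om. real (idx l (coord t (fst p))) / 2^l \<le> a0}"
      unfolding RR_def Sc_def key_def using tj by auto
    have sub: "sd {p\<in>Om. coord t (fst p) \<le> a0} (RR j m l n Sc) \<subseteq> E l \<times> space Omega"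
    proof
      fix p assume p: "p \<in> sd {p\<in>Om. coord t (fst p) \<le> a0} (RR j m l n Sc)"
      then have pO: "fst p \<in> space Omega" "snd p \<in> space Omega" by (auto simp: sd_def Om_def RR_def)
      note b = idx_coord_bounds[OF pO(1), where l=l and t=t]
      show "p \<in> E l \<times> space Omega"
        using p b pO unfolding sd_def RR E_def by (cases p) auto
    qed
    have EO: "E l \<times> space Omega \<in> sets (gen_alg {1..j} \<Otimes>\<^sub>M gen_alg {j+m..})" using Eg Sg by auto
    interpret D: prob_space "Dm {1..j} {j+m..}" by (rule prob_Dm)
    interpret P: prob_space "Pm {1..j} {j+m..}" by (rule prob_Pm)
    have "measure (Dm {1..j} {j+m..}) (sd {p\<in>Om. coord t (fst p) \<le> a0} (RR j m l n Sc))
           \<le> measure (Dm {1..j} {j+m..}) (E l \<times> space Omega)"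
      by (rule D.finite_measure_mono[OF sub]) (subst sets_Dm, rule EO)
    also have "\<dots> = prob (E l)" using Eg Sg
      by (simp add: measure_Dm_Times Int_absorb2 E_def)
    finally have d: "measure (Dm {1..j} {j+m..}) (sd {p\<in>Om. coord t (fst p) \<le> a0} (RR j m l n Sc)) < e"
      using L[OF l] by linarith
    have "measure (Pm {1..j} {j+m..}) (sd {p\<in>Om. coord t (fst p) \<le> a0} (RR j m l n Sc))
           \<le> measure (Pm {1..j} {j+m..}) (E l \<times> space Omega)"
      by (rule P.finite_measure_mono[OF sub]) (subst sets_Pm, rule EO)
    also have "\<dots> = prob (E l)" using Eg Sg
      by (simp add: measure_Pm_Times space_M[symmetric] prob_space)
    finally have p: "measure (Pm {1..j} {j+m..}) (sd {p\<in>Om. coord t (fst p) \<le> a0} (RR j m l n Sc)) < e"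
      using L[OF l] by linarith
    from d p show "\<exists>Sc. measure (Dm {1..j} {j+m..}) (sd {p\<in>Om. coord t (fst p) \<le> a0} (RR j m l n Sc)) < e \<and>
       measure (Pm {1..j} {j+m..}) (sd {p\<in>Om. coord t (fst p) \<le> a0} (RR j m l n Sc)) < e" by blast
  qed
  then show "\<exists>L N. \<forall>l\<ge>L. \<forall>n\<ge>N. \<exists>Sc. measure (Dm {1..j} {j+m..}) (sd {p\<in>Om. coord t (fst p) \<le> a0} (RR j m l n Sc)) < e \<and>
       measure (Pm {1..j} {j+m..}) (sd {p\<in>Om. coord t (fst p) \<le> a0} (RR j m l n Sc)) < e" by blast
qed

lemma basic_snd:
  assumes t: "j + m \<le> t"
  shows "apx (Dm {1..j} {j+m..}) (Pm {1..j} {j+m..}) (RR j m) {p\<in>Om. coord t (snd p) \<le> a0}"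
  unfolding apx_def
proof (intro allI impI)
  fix e :: real assume e: "0 < e"
  define E where "E l = {\<omega>\<in>space Omega. coord t \<omega> \<in> {a0<..a0 + 1/2^l}}" for l :: nat
  obtain L where L: "\<And>l. l \<ge> L \<Longrightarrow> prob (E l) < e" using shrink[OF e, of t a0] unfolding E_def by blast
  have Eg: "E l \<in> sets (gen_alg {j+m..})" for l unfolding E_def using t by (intro coord_in_gen) auto
  have Sg: "space Omega \<in> sets (gen_alg {1..j})" using sets.top[of "gen_alg {1..j}"] by (simp add: space_gen_alg)
  have "\<forall>l\<ge>L. \<forall>n\<ge>t. \<exists>Sc. measure (Dm {1..j} {j+m..}) (sd {p\<in>Om. coord t (snd p) \<le> a0} (RR j m l n Sc)) < e \<and>
       measure (Pm {1..j} {j+m..}) (sd {p\<in>Om. coord t (snd p) \<le> a0} (RR j m l n Sc)) < e"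
  proof (intro allI impI)
    fix l n :: nat assume l: "L \<le> l" and n: "t \<le> n"
    define Sc where "Sc = {AB :: nat list \<times> nat list. real (snd AB ! (t-(j+m))) / 2^l \<le> a0}"
    have tj: "t - (j+m) < n - m - j + 1" "j + m + (t - (j+m)) = t" using t n by auto
    have RR: "RR j m l n Sc = {p\<in>Om. real (idx l (coord t (snd p))) / 2^l \<le> a0}"
      unfolding RR_def Sc_def using tj by (auto simp: key_nth)
    have sub: "sd {p\<in>Om. coord t (snd p) \<le> a0} (RR j m l n Sc) \<subseteq> space Omega \<times> E l"
    proof
      fix p assume p: "p \<in> sd {p\<in>Om. coord t (snd p) \<le> a0} (RR j m l n Sc)"
      then have pO: "fst p \<in> space Omega" "snd p \<in> space Omega" by (auto simp: sd_def Om_def RR_def)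
      note b = idx_coord_bounds[OF pO(2), where l=l and t=t]
      show "p \<in> space Omega \<times> E l"
        using p b pO unfolding sd_def RR E_def by (cases p) auto
    qed
    have EO: "space Omega \<times> E l \<in> sets (gen_alg {1..j} \<Otimes>\<^sub>M gen_alg {j+m..})" using Eg Sg by auto
    interpret D: prob_space "Dm {1..j} {j+m..}" by (rule prob_Dm)
    interpret P: prob_space "Pm {1..j} {j+m..}" by (rule prob_Pm)
    have "measure (Dm {1..j} {j+m..}) (sd {p\<in>Om. coord t (snd p) \<le> a0} (RR j m l n Sc))
           \<le> measure (Dm {1..j} {j+m..}) (space Omega \<times> E l)"
      by (rule D.finite_measure_mono[OF sub]) (subst sets_Dm, rule EO)
    also have "\<dots> = prob (E l)" using Eg Sg
      by (simp add: measure_Dm_Times Int_absorb1 E_def)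
    finally have d: "measure (Dm {1..j} {j+m..}) (sd {p\<in>Om. coord t (snd p) \<le> a0} (RR j m l n Sc)) < e"
      using L[OF l] by linarith
    have "measure (Pm {1..j} {j+m..}) (sd {p\<in>Om. coord t (snd p) \<le> a0} (RR j m l n Sc))
           \<le> measure (Pm {1..j} {j+m..}) (space Omega \<times> E l)"
      by (rule P.finite_measure_mono[OF sub]) (subst sets_Pm, rule EO)
    also have "\<dots> = prob (E l)" using Eg Sg
      by (simp add: measure_Pm_Times space_M[symmetric] prob_space)
    finally have p: "measure (Pm {1..j} {j+m..}) (sd {p\<in>Om. coord t (snd p) \<le> a0} (RR j m l n Sc)) < e"
      using L[OF l] by linarith
    from d p show "\<exists>Sc. measure (Dm {1..j} {j+m..}) (sd {p\<in>Om. coord t (snd p) \<le> a0} (RR j m l n Sc)) < e \<and>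
       measure (Pm {1..j} {j+m..}) (sd {p\<in>Om. coord t (snd p) \<le> a0} (RR j m l n Sc)) < e" by blast
  qed
  then show "\<exists>L N. \<forall>l\<ge>L. \<forall>n\<ge>N. \<exists>Sc. measure (Dm {1..j} {j+m..}) (sd {p\<in>Om. coord t (snd p) \<le> a0} (RR j m l n Sc)) < e \<and>
       measure (Pm {1..j} {j+m..}) (sd {p\<in>Om. coord t (snd p) \<le> a0} (RR j m l n Sc)) < e" by blast
qed

lemma approx_all:
  assumes j: "1 \<le> j" and W: "W \<in> sets (gen_alg {1..j} \<Otimes>\<^sub>M gen_alg {j+m..})"
  shows "apx (Dm {1..j} {j+m..}) (Pm {1..j} {j+m..}) (RR j m) W"
proof -
  interpret D: prob_space "Dm {1..j} {j+m..}" by (rule prob_Dm)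
  interpret P: prob_space "Pm {1..j} {j+m..}" by (rule prob_Pm)
  show ?thesis
  proof (rule approx_sigma[where \<Omega>=Om and G="GG j m"])
    show "finite_measure (Dm {1..j} {j+m..})" by (rule D.finite_measure_axioms)
    show "finite_measure (Pm {1..j} {j+m..})" by (rule P.finite_measure_axioms)
    show "sets (Dm {1..j} {j+m..}) = sigma_sets Om (GG j m)" by (simp only: sets_Dm sets_pairgen)
    show "sets (Pm {1..j} {j+m..}) = sigma_sets Om (GG j m)" by (simp only: sets_Pm sets_pairgen)
    show "GG j m \<subseteq> Pow Om" by (rule GG_Pow)
    show "\<And>l n Sc. RR j m l n Sc \<in> sigma_sets Om (GG j m)"
      using RR_sets[OF j] sets_pairgen by blast
    show "\<And>l n Sc. RR j m l n (- Sc) = Om - RR j m l n Sc" by (rule RR_compl)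
    show "\<And>l n (I::nat set) Sc. RR j m l n (\<Union>i\<in>I. Sc i) = (\<Union>i\<in>I. RR j m l n (Sc i))" by (rule RR_UN)
    show "W \<in> sigma_sets Om (GG j m)" using W sets_pairgen by blast
    fix a assume "a \<in> GG j m"
    then consider t a0 where "t \<in> {1..j}" "a = {p\<in>Om. coord t (fst p) \<le> a0}"
      | t a0 where "j+m \<le> t" "a = {p\<in>Om. coord t (snd p) \<le> a0}"
      unfolding GG_def by blast
    then show "apx (Dm {1..j} {j+m..}) (Pm {1..j} {j+m..}) (RR j m) a"
    proof cases
      case 1 then show ?thesis using basic_fst[OF 1(1)] by simp
    next
      case 2 then show ?thesis using basic_snd[OF 2(1)] by simp
    qed
  qed
qed

end



lemma blk_key_eq: "\<omega> \<in> blk l A s \<Longrightarrow> A \<in> dyadic_cubes k l \<Longrightarrow> key l s k \<omega> = A"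
  using mem_blk_key[of \<omega> A k l s] by (auto simp: blk_def)

context proc
begin

definition dd :: "nat \<Rightarrow> nat \<Rightarrow> nat \<Rightarrow> nat list \<times> nat list \<Rightarrow> real" where
  "dd l j m AB = prob (blk l (fst AB) 1 \<inter> blk l (snd AB) (j+m)) - prob (blk l (fst AB) 1) * prob (blk l (snd AB) (j+m))"

definition CC :: "nat \<Rightarrow> nat \<Rightarrow> nat \<Rightarrow> (nat list \<times> nat list) set" where
  "CC l j k = dyadic_cubes j l \<times> dyadic_cubes k l"

lemma finite_CC: "finite (CC l j k)" by (simp add: CC_def finite_cubes)

lemma rect_disj: "disjoint_family_on (\<lambda>AB. blk l (fst AB) 1 \<times> blk l (snd AB) (j+m)) (CC l j k)"
  unfolding disjoint_family_on_def
proof (intro ballI impI)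
  fix AB AB' assume AB: "AB \<in> CC l j k" and AB': "AB' \<in> CC l j k" and ne: "AB \<noteq> AB'"
  show "(blk l (fst AB) 1 \<times> blk l (snd AB) (j+m)) \<inter> (blk l (fst AB') 1 \<times> blk l (snd AB') (j+m)) = {}"
  proof (rule ccontr)
    assume "(blk l (fst AB) 1 \<times> blk l (snd AB) (j+m)) \<inter> (blk l (fst AB') 1 \<times> blk l (snd AB') (j+m)) \<noteq> {}"
    then obtain x y where x: "x \<in> blk l (fst AB) 1" "x \<in> blk l (fst AB') 1"
      and y: "y \<in> blk l (snd AB) (j+m)" "y \<in> blk l (snd AB') (j+m)" by auto
    have c: "fst AB \<in> dyadic_cubes j l" "fst AB' \<in> dyadic_cubes j l"
      "snd AB \<in> dyadic_cubes k l" "snd AB' \<in> dyadic_cubes k l" using AB AB' by (auto simp: CC_def)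
    have "fst AB = fst AB'" using blk_key_eq[OF x(1) c(1)] blk_key_eq[OF x(2) c(2)] by simp
    moreover have "snd AB = snd AB'" using blk_key_eq[OF y(1) c(3)] blk_key_eq[OF y(2) c(4)] by simp
    ultimately show False using ne by (simp add: prod_eq_iff)
  qed
qed

lemma rect_sets:
  assumes j: "1 \<le> j" and AB: "AB \<in> CC l j k"
  shows "blk l (fst AB) 1 \<in> sets (gen_alg {1..j})" "blk l (snd AB) (j+m) \<in> sets (gen_alg {j+m..})"
proof -
  have la: "length (fst AB) = j" using AB by (auto simp: CC_def dyadic_cubes_def)
  show "blk l (fst AB) 1 \<in> sets (gen_alg {1..j})" by (rule blk_gen) (use la in auto)
  show "blk l (snd AB) (j+m) \<in> sets (gen_alg {j+m..})" by (rule blk_gen) auto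
qed

lemma RR_eq: "RR j m l n Sc = (\<Union>AB\<in>Sc \<inter> CC l j (n-m-j+1). blk l (fst AB) 1 \<times> blk l (snd AB) (j+m))"
  unfolding RR_union CC_def ..

lemma measure_D_RR:
  assumes j: "1 \<le> j"
  shows "measure (Dm {1..j} {j+m..}) (RR j m l n Sc) =
    (\<Sum>AB\<in>Sc \<inter> CC l j (n-m-j+1). prob (blk l (fst AB) 1 \<inter> blk l (snd AB) (j+m)))"
proof -
  interpret D: prob_space "Dm {1..j} {j+m..}" by (rule prob_Dm)
  have "measure (Dm {1..j} {j+m..}) (RR j m l n Sc) =
      (\<Sum>AB\<in>Sc \<inter> CC l j (n-m-j+1). measure (Dm {1..j} {j+m..}) (blk l (fst AB) 1 \<times> blk l (snd AB) (j+m)))"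
    unfolding RR_eq
  proof (rule measure_finite_Union)
    show "finite (Sc \<inter> CC l j (n-m-j+1))" using finite_CC by blast
    show "(\<lambda>AB. blk l (fst AB) 1 \<times> blk l (snd AB) (j+m)) ` (Sc \<inter> CC l j (n-m-j+1)) \<subseteq> sets (Dm {1..j} {j+m..})"
      using rect_sets[OF j] by (auto simp: sets_Dm)
    show "disjoint_family_on (\<lambda>AB. blk l (fst AB) 1 \<times> blk l (snd AB) (j+m)) (Sc \<inter> CC l j (n-m-j+1))"
      by (rule disjoint_family_on_mono[OF _ rect_disj]) auto
  qed (unfold infinity_ennreal_def, rule D.emeasure_finite)
  also have "\<dots> = (\<Sum>AB\<in>Sc \<inter> CC l j (n-m-j+1). prob (blk l (fst AB) 1 \<inter> blk l (snd AB) (j+m)))"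
  proof (rule sum.cong)
    fix AB assume "AB \<in> Sc \<inter> CC l j (n-m-j+1)"
    then have AB: "AB \<in> CC l j (n-m-j+1)" by blast
    show "measure (Dm {1..j} {j+m..}) (blk l (fst AB) 1 \<times> blk l (snd AB) (j+m)) =
       prob (blk l (fst AB) 1 \<inter> blk l (snd AB) (j+m))"
      by (rule measure_Dm_Times[OF rect_sets(1)[OF j AB] rect_sets(2)[OF j AB]])
  qed simp
  finally show ?thesis .
qed

lemma measure_P_RR:
  assumes j: "1 \<le> j"
  shows "measure (Pm {1..j} {j+m..}) (RR j m l n Sc) =
    (\<Sum>AB\<in>Sc \<inter> CC l j (n-m-j+1). prob (blk l (fst AB) 1) * prob (blk l (snd AB) (j+m)))"
proof -
  interpret P: prob_space "Pm {1..j} {j+m..}" by (rule prob_Pm)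
  have "measure (Pm {1..j} {j+m..}) (RR j m l n Sc) =
      (\<Sum>AB\<in>Sc \<inter> CC l j (n-m-j+1). measure (Pm {1..j} {j+m..}) (blk l (fst AB) 1 \<times> blk l (snd AB) (j+m)))"
    unfolding RR_eq
  proof (rule measure_finite_Union)
    show "finite (Sc \<inter> CC l j (n-m-j+1))" using finite_CC by blast
    show "(\<lambda>AB. blk l (fst AB) 1 \<times> blk l (snd AB) (j+m)) ` (Sc \<inter> CC l j (n-m-j+1)) \<subseteq> sets (Pm {1..j} {j+m..})"
      using rect_sets[OF j] by (auto simp: sets_Pm)
    show "disjoint_family_on (\<lambda>AB. blk l (fst AB) 1 \<times> blk l (snd AB) (j+m)) (Sc \<inter> CC l j (n-m-j+1))"
      by (rule disjoint_family_on_mono[OF _ rect_disj]) auto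
  qed (unfold infinity_ennreal_def, rule P.emeasure_finite)
  also have "\<dots> = (\<Sum>AB\<in>Sc \<inter> CC l j (n-m-j+1). prob (blk l (fst AB) 1) * prob (blk l (snd AB) (j+m)))"
  proof (rule sum.cong)
    fix AB assume "AB \<in> Sc \<inter> CC l j (n-m-j+1)"
    then have AB: "AB \<in> CC l j (n-m-j+1)" by blast
    show "measure (Pm {1..j} {j+m..}) (blk l (fst AB) 1 \<times> blk l (snd AB) (j+m)) =
       prob (blk l (fst AB) 1) * prob (blk l (snd AB) (j+m))"
      by (rule measure_Pm_Times[OF rect_sets(1)[OF j AB] rect_sets(2)[OF j AB]])
  qed simp
  finally show ?thesis .
qed

lemma diff_RR:
  assumes j: "1 \<le> j"
  shows "measure (Dm {1..j} {j+m..}) (RR j m l n Sc) - measure (Pm {1..j} {j+m..}) (RR j m l n Sc) =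
    (\<Sum>AB\<in>Sc \<inter> CC l j (n-m-j+1). dd l j m AB)"
  unfolding measure_D_RR[OF j] measure_P_RR[OF j] dd_def by (simp add: sum_subtractf)

lemma sum_dd_zero:
  assumes j: "1 \<le> j"
  shows "(\<Sum>AB\<in>CC l j (n-m-j+1). dd l j m AB) = 0"
proof -
  have "RR j m l n UNIV = Om" by (auto simp: RR_def)
  moreover have "measure (Dm {1..j} {j+m..}) Om = 1"
    using prob_space.prob_space[OF prob_Dm] by (simp add: space_Dm Om_def)
  moreover have "measure (Pm {1..j} {j+m..}) Om = 1"
    using prob_space.prob_space[OF prob_Pm] by (simp add: space_Pm Om_def)
  ultimately show ?thesis using diff_RR[OF j, where l=l and n=n and Sc=UNIV and m=m] by simp
qed

definition pop :: "nat \<Rightarrow> nat \<Rightarrow> nat \<Rightarrow> nat \<Rightarrow> real" where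
  "pop l n j m = (1/2) * (\<Sum>AB\<in>CC l j (n-m-j+1). \<bar>dd l j m AB\<bar>)"

lemma pop_ge:
  assumes j: "1 \<le> j"
  shows "\<bar>measure (Dm {1..j} {j+m..}) (RR j m l n Sc) - measure (Pm {1..j} {j+m..}) (RR j m l n Sc)\<bar> \<le> pop l n j m"
proof -
  let ?C = "CC l j (n-m-j+1)"
  have fin: "finite ?C" by (rule finite_CC)
  have s0: "(\<Sum>AB\<in>?C. dd l j m AB) = (\<Sum>AB\<in>?C \<inter> Sc. dd l j m AB) + (\<Sum>AB\<in>?C - Sc. dd l j m AB)"
    by (rule sum.Int_Diff[OF fin])
  have s1: "(\<Sum>AB\<in>?C. \<bar>dd l j m AB\<bar>) = (\<Sum>AB\<in>?C \<inter> Sc. \<bar>dd l j m AB\<bar>) + (\<Sum>AB\<in>?C - Sc. \<bar>dd l j m AB\<bar>)"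
    by (rule sum.Int_Diff[OF fin])
  have a1: "\<bar>\<Sum>AB\<in>?C \<inter> Sc. dd l j m AB\<bar> \<le> (\<Sum>AB\<in>?C \<inter> Sc. \<bar>dd l j m AB\<bar>)" by (rule sum_abs)
  have a2: "\<bar>\<Sum>AB\<in>?C - Sc. dd l j m AB\<bar> \<le> (\<Sum>AB\<in>?C - Sc. \<bar>dd l j m AB\<bar>)" by (rule sum_abs)
  have e: "Sc \<inter> ?C = ?C \<inter> Sc" by blast
  show ?thesis unfolding diff_RR[OF j] pop_def e
    using s0 s1 a1 a2 sum_dd_zero[OF j, where l=l and n=n and m=m] by linarith
qed

lemma pop_le:
  assumes j: "1 \<le> j"
  shows "pop l n j m \<le> beta_coef M m"
proof -
  let ?C = "CC l j (n-m-j+1)"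
  define Sc where "Sc = {AB. 0 < dd l j m AB}"
  have fin: "finite ?C" by (rule finite_CC)
  have s0: "(\<Sum>AB\<in>?C. dd l j m AB) = (\<Sum>AB\<in>?C \<inter> Sc. dd l j m AB) + (\<Sum>AB\<in>?C - Sc. dd l j m AB)"
    by (rule sum.Int_Diff[OF fin])
  have s1: "(\<Sum>AB\<in>?C. \<bar>dd l j m AB\<bar>) = (\<Sum>AB\<in>?C \<inter> Sc. \<bar>dd l j m AB\<bar>) + (\<Sum>AB\<in>?C - Sc. \<bar>dd l j m AB\<bar>)"
    by (rule sum.Int_Diff[OF fin])
  have p1: "(\<Sum>AB\<in>?C \<inter> Sc. \<bar>dd l j m AB\<bar>) = (\<Sum>AB\<in>?C \<inter> Sc. dd l j m AB)"
    by (rule sum.cong) (auto simp: Sc_def)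
  have p2: "(\<Sum>AB\<in>?C - Sc. \<bar>dd l j m AB\<bar>) = - (\<Sum>AB\<in>?C - Sc. dd l j m AB)"
    by (subst sum_negf[symmetric], rule sum.cong) (auto simp: Sc_def)
  have e: "Sc \<inter> ?C = ?C \<inter> Sc" by blast
  have "pop l n j m = measure (Dm {1..j} {j+m..}) (RR j m l n Sc) - measure (Pm {1..j} {j+m..}) (RR j m l n Sc)"
    unfolding diff_RR[OF j] pop_def e using s0 s1 p1 p2 sum_dd_zero[OF j, where l=l and n=n and m=m] by linarith
  also have "\<dots> \<le> beta_sub M (gen_alg {1..j}) (gen_alg {j+m..})"
    using beta_sub_upper[OF RR_sets[OF j]] by (simp add: abs_le_iff)
  also have "\<dots> \<le> beta_coef M m" by (rule beta_coef_upper[OF j])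
  finally show ?thesis .
qed

end



context proc
begin

definition BB :: real where "BB = suminf (\<lambda>m. beta_coef M (Suc m))"

lemma csum_bound:
  assumes sm: "summable (\<lambda>m. beta_coef M (Suc m))" and L: "1 \<le> L"
  shows "(\<Sum>d\<in>{1..N}. beta_coef M ((d - 1) * L + 1)) \<le> BB"
proof -
  have inj: "inj_on (\<lambda>d. (d - 1) * L) {1..N}"
  proof (rule inj_onI)
    fix x y assume "x \<in> {1..N}" "y \<in> {1..N}" "(x - 1) * L = (y - 1) * L"
    then show "x = y" using L by (simp; linarith)
  qed
  have "(\<Sum>d\<in>{1..N}. beta_coef M ((d - 1) * L + 1)) = (\<Sum>d\<in>{1..N}. (\<lambda>m. beta_coef M (Suc m)) ((d - 1) * L))"
    by simp
  also have "\<dots> = (\<Sum>m\<in>(\<lambda>d. (d - 1) * L) ` {1..N}. beta_coef M (Suc m))"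
    using inj by (simp add: sum.reindex)
  also have "\<dots> \<le> BB" unfolding BB_def
    by (rule sum_le_suminf[OF sm]) (auto simp: beta_coef_nonneg)
  finally show ?thesis .
qed

lemma block_conc:
  fixes E :: "nat \<Rightarrow> (nat \<Rightarrow> real) set"
  assumes sm: "summable (\<lambda>m. beta_coef M (Suc m))" and L: "1 \<le> L"
    and E1: "\<And>i. E i \<in> sets (gen_alg {1..(i+1)*L})" and E2: "\<And>i. E i \<in> sets (gen_alg {i*L+1..})"
    and pE: "\<And>i. prob (E i) = p" and \<tau>: "0 < \<tau>" and \<eta>: "0 < \<eta>"
  shows "prob {x\<in>space M. \<eta> \<le> \<bar>(1/real \<tau>) * (\<Sum>i<\<tau>. if x \<in> E i then 1 else 0) - p\<bar>}
           \<le> (1 + 2*BB) / (real \<tau> * \<eta>^2)"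
proof (rule conc[where c="\<lambda>d. beta_coef M ((d - 1) * L + 1)"])
  show "\<And>i. E i \<in> events" using E1 gen_ev by blast
  show "\<And>i. prob (E i) = p" by (rule pE)
  show "\<And>d. 0 \<le> beta_coef M ((d - 1) * L + 1)" by (rule beta_coef_nonneg)
  show "\<And>N. (\<Sum>d\<in>{1..N}. beta_coef M ((d - 1) * L + 1)) \<le> BB" by (rule csum_bound[OF sm L])
  show "0 < \<tau>" "0 < \<eta>" by (rule \<tau>, rule \<eta>)
  fix i k :: nat assume ik: "i < k"
  have eq: "k * L + 1 = (i+1)*L + ((k - i - 1) * L + 1)"
  proof -
    have "k = (i + 1) + (k - i - 1)" using ik by simp
    then have "k * L = (i+1)*L + (k - i - 1) * L" by (metis add_mult_distrib)
    then show ?thesis by simp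
  qed
  have "E k \<in> sets (gen_alg {(i+1)*L + ((k - i - 1) * L + 1)..})" using E2[of k] unfolding eq .
  moreover have "1 \<le> (i+1)*L" using L by simp
  ultimately have "\<bar>prob (E i \<inter> E k) - prob (E i) * prob (E k)\<bar> \<le> beta_coef M ((k - i - 1) * L + 1)"
    using mixing E1[of i] by blast
  moreover have "(k - i - 1) * L + 1 = (k - i - 1) * L + 1" ..
  moreover have "k - i - 1 = (k - i) - 1" by simp
  ultimately show "\<bar>prob (E i \<inter> E k) - p^2\<bar> \<le> beta_coef M ((k - i - 1) * L + 1)"
    using pE by (simp add: power2_eq_square)
qed

lemma avg_meas:
  assumes "\<And>i. E i \<in> events"
  shows "{x\<in>space M. \<eta> \<le> \<bar>(1/real \<tau>) * (\<Sum>i<\<tau>. if x \<in> E i then 1 else 0) - p\<bar>} \<in> events"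
proof -
  have f: "(\<lambda>x. (1/real \<tau>) * (\<Sum>i<\<tau>. indicator (E i) x) - p :: real) \<in> borel_measurable M"
    using assms by simp
  have "(\<lambda>x. \<bar>(1/real \<tau>) * (\<Sum>i<\<tau>. indicator (E i) x) - p :: real\<bar>) \<in> borel_measurable M"
    using borel_measurable_abs[OF f] .
  then have h: "{x\<in>space M. \<eta> \<le> \<bar>(1/real \<tau>) * (\<Sum>i<\<tau>. indicator (E i) x) - p :: real\<bar>} \<in> events"
    unfolding borel_measurable_iff_ge by blast
  have e: "\<And>x. (\<Sum>i<\<tau>. if x \<in> E i then 1 else 0::real) = (\<Sum>i<\<tau>. indicator (E i) x)"
    by (intro sum.cong) (auto simp: indicator_def)
  show ?thesis unfolding e by (rule h)
qed

lemma emp_mu_eq: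
  assumes "x \<in> space Omega"
  shows "emp_mu l \<tau> x A = (1/real \<tau>) * (\<Sum>i<\<tau>. if x \<in> blk l A (i * length A + 1) then 1 else 0)"
  unfolding emp_mu_def blk_def using assms by simp

lemma emp_gamma_eq:
  assumes "x \<in> space Omega"
  shows "emp_gamma l \<tau> n m j x A B = (1/real \<tau>) *
     (\<Sum>i<\<tau>. if x \<in> blk l A (i * n + 1) \<inter> blk l B (i * n + j + m) then 1 else 0)"
  unfolding emp_gamma_def blk_def using assms by simp

lemma emp_mu_01: "0 < \<tau> \<Longrightarrow> 0 \<le> emp_mu l \<tau> x A \<and> emp_mu l \<tau> x A \<le> 1"
proof -
  assume \<tau>: "0 < \<tau>"
  have "(\<Sum>i<\<tau>. if block_in l A (i * length A + 1) x then 1 else 0) \<le> (\<Sum>i<\<tau>. (1::real))"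
    by (rule sum_mono) auto
  then have "(\<Sum>i<\<tau>. if block_in l A (i * length A + 1) x then 1 else 0) \<le> real \<tau>" by simp
  moreover have "0 \<le> (\<Sum>i<\<tau>. if block_in l A (i * length A + 1) x then 1 else (0::real))"
    by (rule sum_nonneg) auto
  ultimately show ?thesis unfolding emp_mu_def using \<tau> by (auto simp: field_simps)
qed

lemma conc_mu:
  assumes sm: "summable (\<lambda>m. beta_coef M (Suc m))" and st: "stationary M"
    and L: "1 \<le> length A" and \<tau>: "0 < \<tau>" and \<eta>: "0 < \<eta>"
  shows "prob {x\<in>space M. \<eta> \<le> \<bar>(1/real \<tau>) * (\<Sum>i<\<tau>. if x \<in> blk l A (i * length A + 1) then 1 else 0)
            - prob (blk l A 1)\<bar>} \<le> (1 + 2*BB) / (real \<tau> * \<eta>^2)"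
proof (rule block_conc[OF sm L _ _ _ \<tau> \<eta>])
  fix i
  show "blk l A (i * length A + 1) \<in> sets (gen_alg {1..(i+1) * length A})" by (rule blk_gen) auto
  show "blk l A (i * length A + 1) \<in> sets (gen_alg {i * length A + 1..})" by (rule blk_gen) auto
  show "prob (blk l A (i * length A + 1)) = prob (blk l A 1)"
    using stat_blk1[OF st order_refl, of l A "i * length A"] by (simp add: add.commute)
qed

lemma conc_gamma:
  assumes sm: "summable (\<lambda>m. beta_coef M (Suc m))" and st: "stationary M"
    and j: "1 \<le> j" and jn: "j + m \<le> n" and m: "1 \<le> m" and LB: "length B = n - m - j + 1"
    and LA: "length A = j" and \<tau>: "0 < \<tau>" and \<eta>: "0 < \<eta>"
  shows "prob {x\<in>space M. \<eta> \<le> \<bar>(1/real \<tau>) * (\<Sum>i<\<tau>. if x \<in> blk l A (i * n + 1) \<inter> blk l B (i * n + j + m) then 1 else 0)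
            - prob (blk l A 1 \<inter> blk l B (j+m))\<bar>} \<le> (1 + 2*BB) / (real \<tau> * \<eta>^2)"
proof (rule block_conc[OF sm _ _ _ _ \<tau> \<eta>])
  show "1 \<le> n" using jn j by simp
  fix i
  show "blk l A (i * n + 1) \<inter> blk l B (i * n + j + m) \<in> sets (gen_alg {1..(i+1) * n})"
  proof (intro sets.Int)
    show "blk l A (i * n + 1) \<in> sets (gen_alg {1..(i+1) * n})" by (rule blk_gen) (use LA jn in auto)
    show "blk l B (i * n + j + m) \<in> sets (gen_alg {1..(i+1) * n})" by (rule blk_gen) (use LB jn j in auto)
  qed
  show "blk l A (i * n + 1) \<inter> blk l B (i * n + j + m) \<in> sets (gen_alg {i * n + 1..})"
  proof (intro sets.Int)
    show "blk l A (i * n + 1) \<in> sets (gen_alg {i * n + 1..})" by (rule blk_gen) auto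
    show "blk l B (i * n + j + m) \<in> sets (gen_alg {i * n + 1..})" by (rule blk_gen) (use j in auto)
  qed
  have "prob (blk l A (1 + i * n) \<inter> blk l B ((j + m) + i * n)) = prob (blk l A 1 \<inter> blk l B (j+m))"
    by (rule stat_blk2[OF st]) (use j in auto)
  then show "prob (blk l A (i * n + 1) \<inter> blk l B (i * n + j + m)) = prob (blk l A 1 \<inter> blk l B (j+m))"
    by (simp add: ac_simps)
qed

end



lemma five_le: "5 * X \<le> 2^(2*X+1) + (2::nat)"
proof (induction X)
  case (Suc X)
  have "(2::nat) \<le> 2^(2*X+1)" using power_increasing[of 1 "2*X+1" "2::nat"] by simp
  then have "2^(2*X+1) + 5 \<le> 4 * 2^(2*X+1) + (0::nat)" by linarith
  moreover have "(2::nat)^(2 * Suc X + 1) = 4 * 2^(2*X+1)" by (simp add: power_Suc)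
  ultimately show ?case using Suc by simp
qed simp

lemma num_nat:
  assumes "n \<le> X"
  shows "n * n * 12 * 8^X \<le> (2::nat)^(2^(2*X+1) + 6)"
proof -
  have "n < 2^n" by (rule less_exp)
  also have "(2::nat)^n \<le> 2^X" using assms by (simp add: power_increasing)
  finally have n: "n \<le> 2^X" by simp
  have "n * n \<le> 2^X * 2^X" using n by (simp add: mult_le_mono)
  then have "n * n * 12 * 8^X \<le> 2^X * 2^X * 16 * 8^X" by simp
  also have "\<dots> = 2^(5*X+4)"
  proof -
    have "(2::nat)^X * 2^X * 8^X = (2*2*8)^X" by (simp only: power_mult_distrib)
    moreover have "(2::nat)^(5*X+4) = (2^5)^X * 16" by (simp add: power_add power_mult)
    ultimately show ?thesis by simp
  qed
  also have "\<dots> \<le> (2::nat)^(2^(2*X+1) + 6)" using five_le[of X] by (intro power_increasing) auto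
  finally show ?thesis .
qed

lemma num_real:
  assumes "n \<le> X"
  shows "real n * real n * (3 * 2^X) * (4 * 4^X) \<le> (2::real)^(2^(2*X+1) + 6)"
proof -
  have "real n * real n * (3 * 2^X) * (4 * 4^X) = real (n * n * 12 * 8^X)"
    by (simp add: power_mult_distrib[symmetric])
  also have "\<dots> \<le> real ((2::nat)^(2^(2*X+1) + 6))" using num_nat[OF assms] by (simp only: of_nat_le_iff)
  also have "\<dots> = (2::real)^(2^(2*X+1) + 6)" by simp
  finally show ?thesis .
qed

lemma abs_abs_diff: "\<bar>\<bar>a\<bar> - \<bar>b::real\<bar>\<bar> \<le> \<bar>a - b\<bar>" by simp

lemma prod_dev:
  fixes a b c d :: real
  assumes "\<bar>a - c\<bar> \<le> e" "\<bar>b - d\<bar> \<le> e" "\<bar>b\<bar> \<le> 1" "\<bar>c\<bar> \<le> 1"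
  shows "\<bar>a * b - c * d\<bar> \<le> 2 * e"
proof -
  have "a * b - c * d = (a - c) * b + c * (b - d)" by (simp add: algebra_simps)
  then have "\<bar>a * b - c * d\<bar> \<le> \<bar>a - c\<bar> * \<bar>b\<bar> + \<bar>c\<bar> * \<bar>b - d\<bar>" by (simp add: abs_mult[symmetric] abs_triangle_ineq)
  also have "\<dots> \<le> e * 1 + 1 * e"
    by (intro add_mono mult_mono) (use assms in auto)
  finally show ?thesis by simp
qed

context proc
begin

definition Tj :: "nat \<Rightarrow> nat \<Rightarrow> nat \<Rightarrow> (nat \<Rightarrow> real) \<Rightarrow> nat \<Rightarrow> nat \<Rightarrow> real" where
  "Tj l \<tau> n x m j = (1/2) * (\<Sum>A\<in>dyadic_cubes j l. \<Sum>B\<in>dyadic_cubes (n - m - j + 1) l.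
       \<bar>emp_gamma l \<tau> n m j x A B - emp_mu l \<tau> x A * emp_mu l \<tau> x B\<bar>)"

lemma beta_hat_Tj: "beta_hat l \<tau> n x m = Max ((\<lambda>j. Tj l \<tau> n x m j) ` {1..n - m})"
  unfolding beta_hat_def Tj_def ..

lemma card_CC_le:
  assumes "j + m \<le> n" "1 \<le> m"
  shows "real (card (CC l j (n-m-j+1))) \<le> 2^(l*n)"
proof -
  have "card (CC l j (n-m-j+1)) = 2^(l*j) * 2^(l*(n-m-j+1))"
    by (simp add: CC_def card_cartesian_product card_cubes)
  also have "\<dots> = 2^(l*(j + (n-m-j+1)))" by (simp add: power_add add_mult_distrib2)
  also have "\<dots> \<le> (2::nat)^(l*n)"
  proof (rule power_increasing)
    have "j + (n-m-j+1) \<le> n" using assms by simp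
    then show "l * (j + (n-m-j+1)) \<le> l * n" by (rule mult_le_mono2)
  qed simp
  finally show ?thesis by (metis of_nat_le_iff of_nat_numeral of_nat_power)
qed

lemma card_cubes_le: "k \<le> n \<Longrightarrow> real (card (dyadic_cubes k l)) \<le> 2^(l*n)"
  unfolding card_cubes by (metis mult_le_mono2 of_nat_le_iff of_nat_numeral of_nat_power one_le_numeral power_increasing)

lemma Tj_close:
  assumes st: "stationary M" and j: "1 \<le> j" and jn: "j + m \<le> n" and m: "1 \<le> m" and \<tau>: "0 < \<tau>"
    and gA: "\<And>A. A \<in> dyadic_cubes j l \<Longrightarrow> \<bar>emp_mu l \<tau> x A - prob (blk l A 1)\<bar> \<le> \<eta>"
    and gB: "\<And>B. B \<in> dyadic_cubes (n-m-j+1) l \<Longrightarrow> \<bar>emp_mu l \<tau> x B - prob (blk l B 1)\<bar> \<le> \<eta>"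
    and gG: "\<And>A B. A \<in> dyadic_cubes j l \<Longrightarrow> B \<in> dyadic_cubes (n-m-j+1) l \<Longrightarrow>
        \<bar>emp_gamma l \<tau> n m j x A B - prob (blk l A 1 \<inter> blk l B (j+m))\<bar> \<le> \<eta>"
    and \<eta>: "0 \<le> \<eta>"
  shows "\<bar>Tj l \<tau> n x m j - pop l n j m\<bar> \<le> 3/2 * 2^(l*n) * \<eta>"
proof -
  let ?C = "CC l j (n-m-j+1)"
  define g where "g AB = \<bar>emp_gamma l \<tau> n m j x (fst AB) (snd AB) - emp_mu l \<tau> x (fst AB) * emp_mu l \<tau> x (snd AB)\<bar>" for AB
  have T: "Tj l \<tau> n x m j = (1/2) * (\<Sum>AB\<in>?C. g AB)"
    unfolding Tj_def g_def CC_def by (simp add: sum.cartesian_product case_prod_beta)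
  have trm: "\<bar>g AB - \<bar>dd l j m AB\<bar>\<bar> \<le> 3 * \<eta>" if AB: "AB \<in> ?C" for AB
  proof -
    obtain A B where ABe: "AB = (A, B)" by (cases AB)
    have A: "A \<in> dyadic_cubes j l" and B: "B \<in> dyadic_cubes (n-m-j+1) l" using AB ABe by (auto simp: CC_def)
    have sB: "prob (blk l B (j+m)) = prob (blk l B 1)"
      using stat_blk1[OF st order_refl, of l B "j+m-1"] j by simp
    have p1: "\<bar>emp_mu l \<tau> x A * emp_mu l \<tau> x B - prob (blk l A 1) * prob (blk l B 1)\<bar> \<le> 2 * \<eta>"
      by (rule prod_dev[OF gA[OF A] gB[OF B]]) (use emp_mu_01[OF \<tau>] prob_le_1 measure_nonneg in \<open>auto simp: abs_le_iff\<close>)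
    have "\<bar>g AB - \<bar>dd l j m AB\<bar>\<bar> \<le> \<bar>(emp_gamma l \<tau> n m j x A B - emp_mu l \<tau> x A * emp_mu l \<tau> x B) - dd l j m AB\<bar>"
      unfolding g_def ABe by simp
    also have "\<dots> = \<bar>(emp_gamma l \<tau> n m j x A B - prob (blk l A 1 \<inter> blk l B (j+m)))
        - (emp_mu l \<tau> x A * emp_mu l \<tau> x B - prob (blk l A 1) * prob (blk l B 1))\<bar>"
      by (simp add: dd_def ABe sB algebra_simps)
    also have "\<dots> \<le> \<bar>emp_gamma l \<tau> n m j x A B - prob (blk l A 1 \<inter> blk l B (j+m))\<bar>
        + \<bar>emp_mu l \<tau> x A * emp_mu l \<tau> x B - prob (blk l A 1) * prob (blk l B 1)\<bar>"
      by (rule abs_triangle_ineq4)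
    also have "\<dots> \<le> \<eta> + 2 * \<eta>" using gG[OF A B] p1 by linarith
    finally show ?thesis by simp
  qed
  have "\<bar>(\<Sum>AB\<in>?C. g AB) - (\<Sum>AB\<in>?C. \<bar>dd l j m AB\<bar>)\<bar> \<le> (\<Sum>AB\<in>?C. \<bar>g AB - \<bar>dd l j m AB\<bar>\<bar>)"
    unfolding sum_subtractf[symmetric] by (rule sum_abs)
  also have "\<dots> \<le> (\<Sum>AB\<in>?C. 3 * \<eta>)" by (rule sum_mono) (rule trm)
  also have "\<dots> = real (card ?C) * (3 * \<eta>)" by simp
  also have "\<dots> \<le> 2^(l*n) * (3 * \<eta>)" using card_CC_le[OF jn m] \<eta> by (intro mult_right_mono) auto
  finally have "\<bar>(\<Sum>AB\<in>?C. g AB) - (\<Sum>AB\<in>?C. \<bar>dd l j m AB\<bar>)\<bar> \<le> 2^(l*n) * (3 * \<eta>)" .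
  then show ?thesis unfolding T pop_def by (simp add: abs_mult field_simps)
qed

definition EvA :: "nat \<Rightarrow> nat \<Rightarrow> real \<Rightarrow> nat list \<Rightarrow> (nat \<Rightarrow> real) set" where
  "EvA l \<tau> \<eta> A = {x\<in>space M. \<eta> \<le> \<bar>(1/real \<tau>) * (\<Sum>i<\<tau>. if x \<in> blk l A (i * length A + 1) then 1 else 0)
            - prob (blk l A 1)\<bar>}"

definition EvG :: "nat \<Rightarrow> nat \<Rightarrow> nat \<Rightarrow> real \<Rightarrow> nat \<Rightarrow> nat \<Rightarrow> nat list \<times> nat list \<Rightarrow> (nat \<Rightarrow> real) set" where
  "EvG l n \<tau> \<eta> m j AB = {x\<in>space M. \<eta> \<le> \<bar>(1/real \<tau>) *
     (\<Sum>i<\<tau>. if x \<in> blk l (fst AB) (i * n + 1) \<inter> blk l (snd AB) (i * n + j + m) then 1 else 0)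
            - prob (blk l (fst AB) 1 \<inter> blk l (snd AB) (j+m))\<bar>}"

definition BadS :: "nat \<Rightarrow> nat \<Rightarrow> nat \<Rightarrow> (nat \<Rightarrow> nat) \<Rightarrow> real \<Rightarrow> (nat \<Rightarrow> real) set" where
  "BadS l n Mt \<tau> \<eta> = (\<Union>m\<in>{1..Mt}. \<Union>j\<in>{1..n-m}.
      (\<Union>AB\<in>CC l j (n-m-j+1). EvG l n (\<tau> m) \<eta> m j AB) \<union>
      (\<Union>A\<in>dyadic_cubes j l. EvA l (\<tau> m) \<eta> A) \<union> (\<Union>B\<in>dyadic_cubes (n-m-j+1) l. EvA l (\<tau> m) \<eta> B))"

lemma EvA_ev: "EvA l \<tau> \<eta> A \<in> events"
  unfolding EvA_def by (rule avg_meas) (rule blk_ev)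

lemma EvG_ev: "EvG l n \<tau> \<eta> m j AB \<in> events"
  unfolding EvG_def by (rule avg_meas) (intro sets.Int blk_ev)

lemma BadS_ev: "BadS l n Mt \<tau> \<eta> \<in> events"
  unfolding BadS_def
  by (intro sets.finite_UN sets.Un finite_atLeastAtMost finite_CC finite_cubes EvA_ev EvG_ev)

lemma sum_card_bound:
  fixes f :: "'b \<Rightarrow> real"
  assumes "finite I" "\<And>i. i \<in> I \<Longrightarrow> f i \<le> K" "real (card I) \<le> Nc" "0 \<le> K"
  shows "(\<Sum>i\<in>I. f i) \<le> Nc * K"
proof -
  have "(\<Sum>i\<in>I. f i) \<le> (\<Sum>i\<in>I. K)" by (rule sum_mono) (rule assms(2))
  also have "\<dots> = real (card I) * K" by simp
  also have "\<dots> \<le> Nc * K" using assms(3,4) by (rule mult_right_mono)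
  finally show ?thesis .
qed

lemma prob_UN_bound:
  assumes "finite I" "\<And>i. i \<in> I \<Longrightarrow> F i \<in> events" "\<And>i. i \<in> I \<Longrightarrow> prob (F i) \<le> K" "real (card I) \<le> Nc" "0 \<le> K"
  shows "prob (\<Union>i\<in>I. F i) \<le> Nc * K"
proof -
  have "prob (\<Union>i\<in>I. F i) \<le> (\<Sum>i\<in>I. prob (F i))" by (rule measure_UNION_le) (use assms in auto)
  also have "\<dots> \<le> Nc * K" by (rule sum_card_bound) (use assms in auto)
  finally show ?thesis .
qed

lemma BadS_bound:
  assumes sm: "summable (\<lambda>m. beta_coef M (Suc m))" and st: "stationary M"
    and Mn: "Mt < n" and l: "1 \<le> l" and \<tau>: "\<And>m. m \<in> {1..Mt} \<Longrightarrow> 0 < \<tau> m" and \<eta>: "0 < \<eta>"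
    and K: "\<And>m. m \<in> {1..Mt} \<Longrightarrow> (1 + 2*BB) / (real (\<tau> m) * \<eta>^2) \<le> K" and K0: "0 \<le> K"
  shows "prob (BadS l n Mt \<tau> \<eta>) \<le> real n * (real n * ((2^(l*n) + 2^(l*n) + 2^(l*n)) * K))"
proof -
  have BB0: "0 \<le> BB" unfolding BB_def by (rule suminf_nonneg[OF sm]) (simp add: beta_coef_nonneg)
  show ?thesis unfolding BadS_def
  proof (rule prob_UN_bound)
    show "real (card {1..Mt}) \<le> real n" using Mn by simp
    show "0 \<le> real n * ((2^(l*n) + 2^(l*n) + 2^(l*n)) * K)" using K0 by simp
    fix m assume m: "m \<in> {1..Mt}"
    have "(\<Union>j\<in>{1..n-m}. x j) \<in> events" if "\<And>j. x j \<in> events" for x using that by auto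
    show "(\<Union>j\<in>{1..n-m}. (\<Union>AB\<in>CC l j (n-m-j+1). EvG l n (\<tau> m) \<eta> m j AB) \<union>
      (\<Union>A\<in>dyadic_cubes j l. EvA l (\<tau> m) \<eta> A) \<union> (\<Union>B\<in>dyadic_cubes (n-m-j+1) l. EvA l (\<tau> m) \<eta> B)) \<in> events"
      by (intro sets.finite_UN sets.Un finite_atLeastAtMost finite_CC finite_cubes EvA_ev EvG_ev)
    show "prob (\<Union>j\<in>{1..n-m}. (\<Union>AB\<in>CC l j (n-m-j+1). EvG l n (\<tau> m) \<eta> m j AB) \<union>
      (\<Union>A\<in>dyadic_cubes j l. EvA l (\<tau> m) \<eta> A) \<union> (\<Union>B\<in>dyadic_cubes (n-m-j+1) l. EvA l (\<tau> m) \<eta> B))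
      \<le> real n * ((2^(l*n) + 2^(l*n) + 2^(l*n)) * K)"
    proof (rule prob_UN_bound)
      show "real (card {1..n-m}) \<le> real n" by simp
      show "(2^(l*n) + 2^(l*n) + 2^(l*n)) * K \<ge> 0" using K0 by simp
      fix j assume j: "j \<in> {1..n-m}"
      have jm: "1 \<le> j" "j + m \<le> n" "1 \<le> m" using j m Mn by auto
      have KA: "prob (EvA l (\<tau> m) \<eta> A) \<le> K" if "1 \<le> length A" for A
        unfolding EvA_def using conc_mu[OF sm st that \<tau>[OF m] \<eta>, where l=l] K[OF m] by linarith
      have KG: "prob (EvG l n (\<tau> m) \<eta> m j AB) \<le> K" if "AB \<in> CC l j (n-m-j+1)" for AB
      proof -
        have LA: "length (fst AB) = j" and LB: "length (snd AB) = n - m - j + 1" using that by (auto simp: CC_def dyadic_cubes_def)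
        show ?thesis unfolding EvG_def
          using conc_gamma[OF sm st jm(1,2,3) LB LA \<tau>[OF m] \<eta>, where l=l] K[OF m] by linarith
      qed
      have "prob ((\<Union>AB\<in>CC l j (n-m-j+1). EvG l n (\<tau> m) \<eta> m j AB) \<union>
        (\<Union>A\<in>dyadic_cubes j l. EvA l (\<tau> m) \<eta> A) \<union> (\<Union>B\<in>dyadic_cubes (n-m-j+1) l. EvA l (\<tau> m) \<eta> B))
        \<le> prob ((\<Union>AB\<in>CC l j (n-m-j+1). EvG l n (\<tau> m) \<eta> m j AB) \<union>
        (\<Union>A\<in>dyadic_cubes j l. EvA l (\<tau> m) \<eta> A)) + prob (\<Union>B\<in>dyadic_cubes (n-m-j+1) l. EvA l (\<tau> m) \<eta> B)"
        by (rule measure_Un_le) (intro sets.finite_UN sets.Un finite_CC finite_cubes EvA_ev EvG_ev)+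
      also have "prob ((\<Union>AB\<in>CC l j (n-m-j+1). EvG l n (\<tau> m) \<eta> m j AB) \<union>
        (\<Union>A\<in>dyadic_cubes j l. EvA l (\<tau> m) \<eta> A)) \<le> prob (\<Union>AB\<in>CC l j (n-m-j+1). EvG l n (\<tau> m) \<eta> m j AB)
         + prob (\<Union>A\<in>dyadic_cubes j l. EvA l (\<tau> m) \<eta> A)"
        by (rule measure_Un_le) (intro sets.finite_UN finite_CC finite_cubes EvA_ev EvG_ev)+
      also have "prob (\<Union>AB\<in>CC l j (n-m-j+1). EvG l n (\<tau> m) \<eta> m j AB) \<le> 2^(l*n) * K"
        by (rule prob_UN_bound[OF finite_CC EvG_ev KG card_CC_le[OF jm(2,3)] K0])
      also have "prob (\<Union>A\<in>dyadic_cubes j l. EvA l (\<tau> m) \<eta> A) \<le> 2^(l*n) * K"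
        by (rule prob_UN_bound[OF finite_cubes EvA_ev KA card_cubes_le K0])
           (use jm in \<open>auto simp: dyadic_cubes_def\<close>)
      also have "prob (\<Union>B\<in>dyadic_cubes (n-m-j+1) l. EvA l (\<tau> m) \<eta> B) \<le> 2^(l*n) * K"
        by (rule prob_UN_bound[OF finite_cubes EvA_ev KA card_cubes_le K0])
           (use jm in \<open>auto simp: dyadic_cubes_def\<close>)
      finally show "prob ((\<Union>AB\<in>CC l j (n-m-j+1). EvG l n (\<tau> m) \<eta> m j AB) \<union>
        (\<Union>A\<in>dyadic_cubes j l. EvA l (\<tau> m) \<eta> A) \<union> (\<Union>B\<in>dyadic_cubes (n-m-j+1) l. EvA l (\<tau> m) \<eta> B))
        \<le> (2^(l*n) + 2^(l*n) + 2^(l*n)) * K" by (simp add: algebra_simps)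
    qed (auto intro!: sets.finite_UN sets.Un finite_CC finite_cubes EvA_ev EvG_ev)
  qed simp
qed

end



lemma measure_sd:
  assumes fm: "finite_measure D" and W: "W \<in> sets D" and R: "R \<in> sets D"
  shows "\<bar>measure D W - measure D R\<bar> \<le> measure D (sd W R)"
proof -
  interpret finite_measure D by (rule fm)
  have sdm: "sd W R \<in> sets D" using W R unfolding sd_def by auto
  have "measure D W \<le> measure D (R \<union> sd W R)"
    by (rule finite_measure_mono) (use R sdm in \<open>auto simp: sd_def\<close>)
  also have "\<dots> \<le> measure D R + measure D (sd W R)" by (rule measure_Un_le) (use R sdm in auto)
  finally have 1: "measure D W \<le> measure D R + measure D (sd W R)" .
  have "measure D R \<le> measure D (W \<union> sd W R)"
    by (rule finite_measure_mono) (use W sdm in \<open>auto simp: sd_def\<close>)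
  also have "\<dots> \<le> measure D W + measure D (sd W R)" by (rule measure_Un_le) (use W sdm in auto)
  finally have 2: "measure D R \<le> measure D W + measure D (sd W R)" .
  show ?thesis using 1 2 by (simp add: abs_le_iff)
qed

lemma tau_bound:
  assumes m: "1 \<le> m" and l: "1 \<le> l" and e: "0 < e" and d: "0 < d"
  shows "(2::real)^(2^(2*(l*n)+1) + 6) / (e^2 * d) \<le> real (nat \<lceil>C_tilde m l n / (real m * e^2 * d)\<rceil>)"
proof -
  have "(4::nat) \<le> 2^(m*l+1)"
  proof -
    have "(2::nat)^2 \<le> 2^(m*l+1)" using m l by (intro power_increasing) (auto simp: Suc_le_eq)
    then show ?thesis by simp
  qed
  then have E: "2^(2*(l*n)+1) + 6 \<le> 2^(2*n*l+1) + 2^(m*l+1) + (2::nat)" by (simp add: ac_simps)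
  have "C_tilde m l n / (real m * e^2 * d) = 2^(2^(2*n*l+1) + 2^(m*l+1) + 2) / (e^2 * d)"
    unfolding C_tilde_def using m by (simp add: field_simps)
  moreover have "(2::real)^(2^(2*(l*n)+1) + 6) \<le> 2^(2^(2*n*l+1) + 2^(m*l+1) + 2)"
    using E by (intro power_increasing) auto
  ultimately have "(2::real)^(2^(2*(l*n)+1) + 6) / (e^2 * d) \<le> C_tilde m l n / (real m * e^2 * d)"
    using e d by (simp add: divide_right_mono)
  also have "\<dots> \<le> real (nat \<lceil>C_tilde m l n / (real m * e^2 * d)\<rceil>)" by (rule real_nat_ceiling_ge)
  finally show ?thesis .
qed

lemma K_bound:
  fixes a P e d \<tau> :: real
  assumes a: "0 \<le> a" and P: "0 < P" and e: "0 < e" and d: "0 < d" and \<tau>: "P / (e^2 * d) \<le> \<tau>"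
  shows "a / (\<tau> * (e / (2 * 2^X))^2) \<le> a * d * (4 * 4^X) / P"
proof -
  have h: "(2::real)^(X*2) = 4^X"
  proof -
    have "(4::real)^X = (2^2)^X" by simp
    also have "\<dots> = 2^(2*X)" by (simp only: power_mult)
    finally show ?thesis by (simp add: mult.commute)
  qed
  have q: "(e / (2 * 2^X))^2 = e^2 / (4 * 4^X)"
    by (simp add: power_divide power_mult_distrib power_mult[symmetric] mult.commute h)
  have pos: "0 < P / (e^2 * d) * (e^2 / (4 * 4^X))" using P e d by simp
  have le: "P / (e^2 * d) * (e^2 / (4 * 4^X)) \<le> \<tau> * (e^2 / (4 * 4^X))"
    using \<tau> e by (intro mult_right_mono) auto
  have pos2: "0 < \<tau> * (e^2 / (4 * 4^X))" using pos le by linarith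
  have "a / (\<tau> * (e^2 / (4 * 4^X))) \<le> a / (P / (e^2 * d) * (e^2 / (4 * 4^X)))"
    by (rule divide_left_mono[OF le a mult_pos_pos[OF pos2 pos]])
  also have "\<dots> = a * d * (4 * 4^X) / P" using e d P by (simp add: field_simps)
  finally show ?thesis unfolding q .
qed




lemma half_lt: "(x::real) < y \<Longrightarrow> x + (y - x)/2 < y" by (simp add: field_simps)

context proc
begin

lemma close_lemma:
  assumes st: "stationary M" and x: "x \<in> space M"
    and nb: "x \<notin> BadS l n Mt \<tau> \<eta>" and m: "m \<in> {1..Mt}" and j: "j \<in> {1..n-m}"
    and Mn: "Mt < n" and \<tau>: "0 < \<tau> m" and \<eta>: "0 \<le> \<eta>"
  shows "\<bar>Tj l (\<tau> m) n x m j - pop l n j m\<bar> \<le> 3/2 * 2^(l*n) * \<eta>"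
proof (rule Tj_close[OF st])
  show "1 \<le> j" "j + m \<le> n" "1 \<le> m" using j m Mn by auto
  show "0 < \<tau> m" by (rule \<tau>)
  show "0 \<le> \<eta>" by (rule \<eta>)
  have xO: "x \<in> space Omega" using x space_M by simp
  have nbA: "x \<notin> EvA l (\<tau> m) \<eta> A" if "A \<in> dyadic_cubes j l" for A
    using nb m j that unfolding BadS_def by blast
  have nbB: "x \<notin> EvA l (\<tau> m) \<eta> B" if "B \<in> dyadic_cubes (n-m-j+1) l" for B
    using nb m j that unfolding BadS_def by blast
  have nbG: "x \<notin> EvG l n (\<tau> m) \<eta> m j (A, B)" if "A \<in> dyadic_cubes j l" "B \<in> dyadic_cubes (n-m-j+1) l" for A B
    using nb m j that unfolding BadS_def CC_def by blast
  show "\<bar>emp_mu l (\<tau> m) x A - prob (blk l A 1)\<bar> \<le> \<eta>" if "A \<in> dyadic_cubes j l" for A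
    using nbA[OF that] x unfolding EvA_def emp_mu_eq[OF xO] by auto
  show "\<bar>emp_mu l (\<tau> m) x B - prob (blk l B 1)\<bar> \<le> \<eta>" if "B \<in> dyadic_cubes (n-m-j+1) l" for B
    using nbB[OF that] x unfolding EvA_def emp_mu_eq[OF xO] by auto
  show "\<bar>emp_gamma l (\<tau> m) n m j x A B - prob (blk l A 1 \<inter> blk l B (j+m))\<bar> \<le> \<eta>"
    if "A \<in> dyadic_cubes j l" "B \<in> dyadic_cubes (n-m-j+1) l" for A B
    using nbG[OF that] x unfolding EvG_def emp_gamma_eq[OF xO] by auto
qed

lemma main:
  fixes \<gamma> :: "nat \<Rightarrow> real"
    and Ms ls ns :: "nat \<Rightarrow> nat"
    and \<delta> :: real and dl eps :: "nat \<Rightarrow> real"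
  assumes Ms: "strict_mono Ms" "\<And>t. Ms t > 0"
    and ls: "strict_mono ls" "\<And>t. ls t > 0"
    and ns: "strict_mono ns" "\<And>t. ns t > 0"
    and ns_Ms: "\<And>t. ns t > Ms t"
    and delta: "\<And>t. dl t > 0" "dl sums \<delta>"
    and eps: "\<And>t. eps t > 0" "eps \<longlonglongrightarrow> 0"
    and st: "stationary M" and sm: "summable (\<lambda>m. beta_coef M (Suc m))"
  shows "AE \<omega> in M. (\<lambda>t. test_g \<gamma> Ms ls ns eps dl t \<omega>)
           \<longlonglongrightarrow> (if class_R \<gamma> M then 1 else -1)"
proof -
  define X where "X t = ls t * ns t" for t
  define \<tau>f where "\<tau>f t m = tau_tilde ls ns eps dl t m" for t m
  define \<eta>f where "\<eta>f t = eps t / (2 * 2^X t)" for t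
  define Kf where "Kf t = (1 + 2*BB) * dl t * (4 * 4^X t) / 2^(2^(2*X t+1) + 6)" for t
  define Bad where "Bad t = BadS (ls t) (ns t) (Ms t) (\<tau>f t) (\<eta>f t)" for t
  have BB0: "0 \<le> BB" unfolding BB_def by (rule suminf_nonneg[OF sm]) (simp add: beta_coef_nonneg)
  have l1: "1 \<le> ls t" for t using ls(2)[of t] by simp
  have \<eta>pos: "0 < \<eta>f t" for t unfolding \<eta>f_def using eps(1)[of t] by simp
  have \<tau>b: "2^(2^(2*X t+1) + 6) / ((eps t)^2 * dl t) \<le> real (\<tau>f t m)" if "m \<in> {1..Ms t}" for t m
    unfolding \<tau>f_def tau_tilde_def X_def
    by (rule tau_bound) (use that l1 eps(1) delta(1) in auto)
  have \<tau>pos: "0 < \<tau>f t m" if "m \<in> {1..Ms t}" for t m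
  proof -
    have "0 < (2::real)^(2^(2*X t+1) + 6) / ((eps t)^2 * dl t)" using eps(1)[of t] delta(1)[of t] by simp
    then show ?thesis using \<tau>b[OF that] by simp
  qed
  have Kb: "(1 + 2*BB) / (real (\<tau>f t m) * (\<eta>f t)^2) \<le> Kf t" if "m \<in> {1..Ms t}" for t m
    unfolding \<eta>f_def Kf_def by (rule K_bound[OF _ _ eps(1) delta(1) \<tau>b[OF that]]) (use BB0 in auto)
  have K0: "0 \<le> Kf t" for t unfolding Kf_def using BB0 delta(1)[of t] by simp
  have pb: "prob (Bad t) \<le> (1 + 2*BB) * dl t" for t
  proof -
    have "prob (Bad t) \<le> real (ns t) * (real (ns t) * ((2^(ls t*ns t) + 2^(ls t*ns t) + 2^(ls t*ns t)) * Kf t))"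
      unfolding Bad_def by (rule BadS_bound[OF sm st ns_Ms l1 \<tau>pos \<eta>pos Kb K0])
    also have "\<dots> = (1 + 2*BB) * dl t * ((real (ns t) * real (ns t) * (3 * 2^X t) * (4 * 4^X t)) / 2^(2^(2*X t+1) + 6))"
      unfolding Kf_def X_def by (simp add: field_simps)
    also have "\<dots> \<le> (1 + 2*BB) * dl t * 1"
    proof (rule mult_left_mono)
      have "ns t \<le> X t" unfolding X_def using l1[of t] by simp
      then show "(real (ns t) * real (ns t) * (3 * 2^X t) * (4 * 4^X t)) / 2^(2^(2*X t+1) + 6) \<le> 1"
        using num_real by simp
      show "0 \<le> (1 + 2*BB) * dl t" using BB0 delta(1)[of t] by simp
    qed
    finally show ?thesis by simp
  qed
  have Bad_ev: "Bad t \<in> events" for t unfolding Bad_def by (rule BadS_ev)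
  have summ: "summable (\<lambda>t. prob (Bad t))"
  proof (rule summable_comparison_test')
    show "summable (\<lambda>t. (1 + 2*BB) * dl t)" using sums_summable[OF delta(2)] by (rule summable_mult)
    show "norm (prob (Bad t)) \<le> (1 + 2*BB) * dl t" for t using pb[of t] by simp
  qed
  have AEb: "AE x in M. eventually (\<lambda>t. x \<in> space M - Bad t) sequentially"
    by (rule borel_cantelli_AE1[OF Bad_ev]) (simp_all add: summ less_top[symmetric])
  have close: "\<bar>Tj (ls t) (\<tau>f t m) (ns t) x m j - pop (ls t) (ns t) j m\<bar> \<le> 3/4 * eps t"
    if "x \<in> space M" "x \<notin> Bad t" "m \<in> {1..Ms t}" "j \<in> {1..ns t - m}" for x t m j
  proof -
    have "\<bar>Tj (ls t) (\<tau>f t m) (ns t) x m j - pop (ls t) (ns t) j m\<bar> \<le> 3/2 * 2^(ls t * ns t) * \<eta>f t"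
      by (rule close_lemma[OF st that(1) that(2)[unfolded Bad_def] that(3,4) ns_Ms \<tau>pos[OF that(3)]])
         (use \<eta>pos in \<open>simp add: less_imp_le\<close>)
    also have "\<dots> = 3/4 * eps t" unfolding \<eta>f_def X_def by simp
    finally show ?thesis .
  qed
  have bh: "beta_hat_t ls ns eps dl t x m = Max ((\<lambda>j. Tj (ls t) (\<tau>f t m) (ns t) x m j) ` {1..ns t - m})" for t x m
    unfolding beta_hat_t_def \<tau>f_def beta_hat_Tj ..
  have ne: "{1..ns t - m} \<noteq> {}" if "m \<in> {1..Ms t}" for t m using that ns_Ms[of t] by auto
  show ?thesis
  proof (cases "class_R \<gamma> M")
    case True
    show ?thesis using AE_space AEb
    proof eventually_elim
      case (elim x)
      have "eventually (\<lambda>t. test_g \<gamma> Ms ls ns eps dl t x = 1) sequentially"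
        using elim(2)
      proof eventually_elim
        case (elim t)
        have "\<forall>m\<in>{1..Ms t}. beta_hat_t ls ns eps dl t x m \<le> \<gamma> m + eps t"
        proof
          fix m assume m: "m \<in> {1..Ms t}"
          have "Tj (ls t) (\<tau>f t m) (ns t) x m j \<le> \<gamma> m + eps t" if j: "j \<in> {1..ns t - m}" for j
          proof -
            have "pop (ls t) (ns t) j m \<le> beta_coef M m" by (rule pop_le) (use j in auto)
            moreover have "beta_coef M m \<le> \<gamma> m" using True m unfolding class_R_def by auto
            moreover have "\<bar>Tj (ls t) (\<tau>f t m) (ns t) x m j - pop (ls t) (ns t) j m\<bar> \<le> 3/4 * eps t"
              by (rule close) (use elim m j in auto)
            ultimately show ?thesis using eps(1)[of t] unfolding abs_le_iff by linarith
          qed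
          then show "beta_hat_t ls ns eps dl t x m \<le> \<gamma> m + eps t"
            unfolding bh using ne[OF m] by simp
        qed
        then show ?case unfolding test_g_def by simp
      qed
      then show ?case using True by (simp add: tendsto_eventually)
    qed
  next
    case False
    then obtain m0 where m0: "1 \<le> m0" "\<gamma> m0 < beta_coef M m0" unfolding class_R_def by (auto simp: not_le)
    define \<eta>0 where "\<eta>0 = beta_coef M m0 - \<gamma> m0"
    have \<eta>0: "0 < \<eta>0" using m0 unfolding \<eta>0_def by simp
    have "\<gamma> m0 + \<eta>0/2 < beta_coef M m0" unfolding \<eta>0_def by (rule half_lt[OF m0(2)])
    then obtain j0 where j0: "j0 \<in> {1..}" "\<gamma> m0 + \<eta>0/2 < beta_sub M (gen_alg {1..j0}) (gen_alg {j0+m0..})"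
      unfolding beta_coef_def
      by (subst (asm) less_cSUP_iff) (auto intro!: bdd_aboveI[where M=1] beta_sub_le1)
    have j01: "1 \<le> j0" using j0 by simp
    obtain W where W: "W \<in> sets (gen_alg {1..j0} \<Otimes>\<^sub>M gen_alg {j0+m0..})"
      and Wg: "\<gamma> m0 + \<eta>0/2 < \<bar>measure (Dm {1..j0} {j0+m0..}) W - measure (Pm {1..j0} {j0+m0..}) W\<bar>"
      using j0(2) unfolding beta_sub_eq
      by (subst (asm) less_cSUP_iff) (auto intro!: bdd_aboveI[where M=1] diff_le1)
    have "apx (Dm {1..j0} {j0+m0..}) (Pm {1..j0} {j0+m0..}) (RR j0 m0) W" by (rule approx_all[OF j01 W])
    then obtain L N where LN: "\<And>l n. L \<le> l \<Longrightarrow> N \<le> n \<Longrightarrow> \<exists>Sc.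
        measure (Dm {1..j0} {j0+m0..}) (sd W (RR j0 m0 l n Sc)) < \<eta>0/8 \<and>
        measure (Pm {1..j0} {j0+m0..}) (sd W (RR j0 m0 l n Sc)) < \<eta>0/8"
      unfolding apx_def using \<eta>0 by (metis zero_less_divide_iff zero_less_numeral)
    have popbig: "\<gamma> m0 + \<eta>0/4 < pop l n j0 m0" if lL: "L \<le> l" and nN: "N \<le> n" for l n
    proof -
      obtain Sc where Sc: "measure (Dm {1..j0} {j0+m0..}) (sd W (RR j0 m0 l n Sc)) < \<eta>0/8"
        "measure (Pm {1..j0} {j0+m0..}) (sd W (RR j0 m0 l n Sc)) < \<eta>0/8" using LN[OF lL nN] by blast
      have R: "RR j0 m0 l n Sc \<in> sets (gen_alg {1..j0} \<Otimes>\<^sub>M gen_alg {j0+m0..})" by (rule RR_sets[OF j01])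
      have d1: "\<bar>measure (Dm {1..j0} {j0+m0..}) W - measure (Dm {1..j0} {j0+m0..}) (RR j0 m0 l n Sc)\<bar>
          \<le> measure (Dm {1..j0} {j0+m0..}) (sd W (RR j0 m0 l n Sc))"
        by (rule measure_sd) (use prob_space.finite_measure[OF prob_Dm] W R in \<open>simp_all add: sets_Dm\<close>)
      have d2: "\<bar>measure (Pm {1..j0} {j0+m0..}) W - measure (Pm {1..j0} {j0+m0..}) (RR j0 m0 l n Sc)\<bar>
          \<le> measure (Pm {1..j0} {j0+m0..}) (sd W (RR j0 m0 l n Sc))"
        by (rule measure_sd) (use prob_space.finite_measure[OF prob_Pm] W R in \<open>simp_all add: sets_Pm\<close>)
      have "\<bar>measure (Dm {1..j0} {j0+m0..}) (RR j0 m0 l n Sc) - measure (Pm {1..j0} {j0+m0..}) (RR j0 m0 l n Sc)\<bar>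
          \<le> pop l n j0 m0" by (rule pop_ge[OF j01])
      then show ?thesis using Wg d1 d2 Sc by (simp add: abs_le_iff abs_less_iff) linarith
    qed
    have ev_l: "eventually (\<lambda>t. L \<le> ls t) sequentially"
      using eventually_ge_at_top[of L] by eventually_elim (use strict_mono_imp_increasing[OF ls(1)] in \<open>metis order_trans\<close>)
    have ev_n: "eventually (\<lambda>t. N + j0 + m0 \<le> ns t) sequentially"
      using eventually_ge_at_top[of "N + j0 + m0"] by eventually_elim (use strict_mono_imp_increasing[OF ns(1)] in \<open>metis order_trans\<close>)
    have ev_M: "eventually (\<lambda>t. m0 \<le> Ms t) sequentially"
      using eventually_ge_at_top[of m0] by eventually_elim (use strict_mono_imp_increasing[OF Ms(1)] in \<open>metis order_trans\<close>)
    have ev_e: "eventually (\<lambda>t. eps t < \<eta>0/8) sequentially"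
      using order_tendstoD(2)[OF eps(2), of "\<eta>0/8"] \<eta>0 by simp
    show ?thesis using AE_space AEb
    proof eventually_elim
      case (elim x)
      have "eventually (\<lambda>t. test_g \<gamma> Ms ls ns eps dl t x = -1) sequentially"
        using elim(2) ev_l ev_n ev_M ev_e
      proof eventually_elim
        case (elim t)
        have m0t: "m0 \<in> {1..Ms t}" using elim m0 by auto
        have j0t: "j0 \<in> {1..ns t - m0}" using elim j01 by auto
        have "\<gamma> m0 + \<eta>0/4 < pop (ls t) (ns t) j0 m0" by (rule popbig) (use elim in auto)
        moreover have "\<bar>Tj (ls t) (\<tau>f t m0) (ns t) x m0 j0 - pop (ls t) (ns t) j0 m0\<bar> \<le> 3/4 * eps t"
          by (rule close) (use elim m0t j0t in auto)
        moreover have "Tj (ls t) (\<tau>f t m0) (ns t) x m0 j0 \<le> beta_hat_t ls ns eps dl t x m0"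
          unfolding bh by (rule Max_ge) (use j0t in auto)
        ultimately have "\<gamma> m0 + eps t < beta_hat_t ls ns eps dl t x m0"
          using elim(5) eps(1)[of t] unfolding abs_le_iff by linarith
        then have "\<not> (\<forall>m\<in>{1..Ms t}. beta_hat_t ls ns eps dl t x m \<le> \<gamma> m + eps t)" using m0t by force
        then show ?case unfolding test_g_def by simp
      qed
      then show ?case using False by (simp add: tendsto_eventually)
    qed
  qed
qed

end

theorem theorem8:
  fixes \<gamma> :: "nat \<Rightarrow> real"
    and Ms ls ns :: "nat \<Rightarrow> nat"
    and \<delta> :: real and dl eps :: "nat \<Rightarrow> real"
    and \<mu> :: "(nat \<Rightarrow> real) measure"
  assumes rate: "\<And>m. \<gamma> m \<in> {0..1}"
    and Ms: "strict_mono Ms" "\<And>t. Ms t > 0"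
    and ls: "strict_mono ls" "\<And>t. ls t > 0"
    and ns: "strict_mono ns" "\<And>t. ns t > 0"
    and ns_Ms: "\<And>t. ns t > Ms t"
    and delta: "0 < \<delta>" "\<delta> < 1" "\<And>t. dl t > 0" "dl sums \<delta>"
    and eps: "decseq eps" "\<And>t. eps t > 0" "eps \<longlonglongrightarrow> 0"
    and mu: "class_C \<mu>"
  shows "AE \<omega> in \<mu>. (\<lambda>t. test_g \<gamma> Ms ls ns eps dl t \<omega>)
           \<longlonglongrightarrow> (if class_R \<gamma> \<mu> then 1 else -1)"
proof -
  have pd: "process_distribution \<mu>" and st: "stationary \<mu>" and sm: "summable (\<lambda>m. beta_coef \<mu> (Suc m))"
    using mu unfolding class_C_def by auto
  interpret proc \<mu>
    using pd unfolding process_distribution_def by (intro proc.intro proc_axioms.intro) auto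
  show ?thesis
    by (rule main[OF Ms ls ns ns_Ms delta(3,4) eps(2,3) st sm])
qed

end
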